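(* Let $p=q=3$ and let $\mathcal V_{\mathrm{phys}}$ and the operators $\hat A_{ij},\hat B_{ij},\hat C_{ij}$ be as in the context. If $W\subset\mathcal V_{\mathrm{phys}}$ is a linear subspace, $W\neq\{0\}$, invariant under all $\hat A_{ij},\hat B_{ij},\hat C_{ij}$, then $W=\mathcal V_{\mathrm{phys}}$.
   Context: On smooth functions of $(\boldsymbol u,\boldsymbol v)\in\mathbb{R}^3\times\mathbb{R}^3$ define $\hat A_{ij}=-i(u_i\partial_{u_j}-u_j\partial_{u_i})$, $\hat B_{ij}=-i(v_i\partial_{v_j}-v_j\partial_{v_i})$, $\hat C_{ij}=u_iv_j+\partial_{u_i}\partial_{v_j}$ for $1\le i,j\le3$. With $u=|\boldsymbol u|$, $v=|\boldsymbol v|$, let $\Psi_{lmn}=j_l(uv)Y_{lm}(\boldsymbol u/u)Y_{ln}(\boldsymbol v/v)$ for integers $l\ge0$, $|m|\le l$, $|n|\le l$, where $j_l$ is the spherical Bessel function of the first kind and $Y_{lm}$ are the standard orthonormal spherical harmonics on $S^2$ (Condon–Shortley phase convention). Let $\mathcal V_{\mathrm{phys}}=\mathrm{span}\{\Psi_{lmn}\}$ (a space invariant under the operators above). *)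

theory Defs
  imports "HOL-Analysis.Analysis" "HOL-Computational_Algebra.Polynomial"
begin

type_synonym phasefun = "real^3 \<Rightarrow> real^3 \<Rightarrow> complex"

definition pdu :: "3 \<Rightarrow> phasefun \<Rightarrow> phasefun" where
  "pdu j f = (\<lambda>u v. vector_derivative (\<lambda>t::real. f (u + t *\<^sub>R axis j 1) v) (at 0))"

definition pdv :: "3 \<Rightarrow> phasefun \<Rightarrow> phasefun" where
  "pdv j f = (\<lambda>u v. vector_derivative (\<lambda>t::real. f u (v + t *\<^sub>R axis j 1)) (at 0))"

definition opA :: "3 \<Rightarrow> 3 \<Rightarrow> phasefun \<Rightarrow> phasefun" where
  "opA i j f = (\<lambda>u v. - \<i> * (complex_of_real (u$i) * pdu j f u v - complex_of_real (u$j) * pdu i f u v))"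

definition opB :: "3 \<Rightarrow> 3 \<Rightarrow> phasefun \<Rightarrow> phasefun" where
  "opB i j f = (\<lambda>u v. - \<i> * (complex_of_real (v$i) * pdv j f u v - complex_of_real (v$j) * pdv i f u v))"

definition opC :: "3 \<Rightarrow> 3 \<Rightarrow> phasefun \<Rightarrow> phasefun" where
  "opC i j f = (\<lambda>u v. complex_of_real (u$i * v$j) * f u v + pdu i (pdv j f) u v)"

definition sph_bessel_j :: "nat \<Rightarrow> real \<Rightarrow> real" where
  "sph_bessel_j l x = (\<Sum>k. 2 ^ l * (-1) ^ k * fact (k + l) * x ^ (2 * k + l)
                             / (fact k * fact (2 * k + 2 * l + 1)))"

text \<open>m-th derivative of the Legendre polynomial P_l (Rodrigues' formula):
  P_l = 1/(2^l l!) d^l/dt^l (t^2-1)^l.\<close>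
definition legendre_deriv_poly :: "nat \<Rightarrow> nat \<Rightarrow> real poly" where
  "legendre_deriv_poly l m = smult (1 / (2 ^ l * fact l)) ((pderiv ^^ (l + m)) ([:-1, 0, 1:] ^ l))"

text \<open>Standard orthonormal spherical harmonics (Condon-Shortley phase), written as
  functions of a unit direction x = (x1,x2,x3), with cos theta = x3 and
  sin theta e^(i phi) = x1 + i x2:
  Y_lm = (-1)^m N_lm (x1 + i x2)^m P_l^(m)(x3)  for m \<ge> 0,
  Y_l,-k = (-1)^k conj(Y_lk) = N_lk (x1 - i x2)^k P_l^(k)(x3),
  N_lk = sqrt((2l+1)/(4 pi) (l-k)!/(l+k)!).\<close>
definition sph_norm :: "nat \<Rightarrow> nat \<Rightarrow> real" where
  "sph_norm l k = sqrt ((2 * real l + 1) / (4 * pi) * fact (l - k) / fact (l + k))"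

definition sph_harm :: "nat \<Rightarrow> int \<Rightarrow> real^3 \<Rightarrow> complex" where
  "sph_harm l m x =
    (if m \<ge> 0 then
       (-1) ^ nat m * complex_of_real (sph_norm l (nat m))
         * (Complex (x$1) (x$2)) ^ nat m
         * complex_of_real (poly (legendre_deriv_poly l (nat m)) (x$3))
     else
       complex_of_real (sph_norm l (nat (- m)))
         * (Complex (x$1) (- (x$2))) ^ nat (- m)
         * complex_of_real (poly (legendre_deriv_poly l (nat (- m))) (x$3)))"

definition Psi :: "nat \<Rightarrow> int \<Rightarrow> int \<Rightarrow> phasefun" where
  "Psi l m n = (\<lambda>u v. complex_of_real (sph_bessel_j l (norm u * norm v))
                       * sph_harm l m (u /\<^sub>R norm u) * sph_harm l n (v /\<^sub>R norm v))"

definition Psi_index :: "(nat \<times> int \<times> int) set" where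
  "Psi_index = {(l, m, n). \<bar>m\<bar> \<le> int l \<and> \<bar>n\<bar> \<le> int l}"

definition V_phys :: "phasefun set" where
  "V_phys = {f. \<exists>S c. finite S \<and> S \<subseteq> Psi_index \<and>
       f = (\<lambda>u v. \<Sum>(l, m, n)\<in>S. c (l, m, n) * Psi l m n u v)}"

definition complex_subspace :: "phasefun set \<Rightarrow> bool" where
  "complex_subspace W \<longleftrightarrow> (\<lambda>u v. 0) \<in> W \<and>
     (\<forall>f\<in>W. \<forall>g\<in>W. (\<lambda>u v. f u v + g u v) \<in> W) \<and>
     (\<forall>c. \<forall>f\<in>W. (\<lambda>u v. c * f u v) \<in> W)"

end

theory Submission
  imports Defs
begin


definition gc :: "nat \<Rightarrow> nat \<Rightarrow> real" where
  "gc l k = 2 ^ l * (-1) ^ k * fact (k + l) / (fact k * fact (2 * k + 2 * l + 1))"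

definition G :: "nat \<Rightarrow> real \<Rightarrow> real" where
  "G l s = (\<Sum>k. gc l k * s ^ k)"

lemma gc_bound: "\<bar>gc l k\<bar> \<le> 2 ^ l / fact k"
proof -
  have "fact (k + l) \<le> (fact (2 * k + 2 * l + 1) :: real)"
    by (intro fact_mono) auto
  then have "fact (k + l) / fact (2 * k + 2 * l + 1) \<le> (1::real)"
    by (simp add: divide_le_eq)
  then have "2 ^ l * (fact (k + l) / fact (2 * k + 2 * l + 1)) / fact k \<le> (2 ^ l * 1 / fact k :: real)"
    by (intro divide_right_mono mult_left_mono) auto
  then show ?thesis unfolding gc_def
    by (simp add: abs_mult power_abs field_simps)
qed

lemma gc_summable: "summable (\<lambda>k. gc l k * s ^ k)"
proof (rule summable_comparison_test[where g = "\<lambda>k. 2 ^ l * (inverse (fact k) * \<bar>s\<bar> ^ k)"])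
  show "\<exists>N. \<forall>n\<ge>N. norm (gc l n * s ^ n) \<le> 2 ^ l * (inverse (fact n) * \<bar>s\<bar> ^ n)"
  proof (intro exI allI impI)
    fix n :: nat
    have "norm (gc l n * s ^ n) = \<bar>gc l n\<bar> * \<bar>s\<bar> ^ n" by (simp add: abs_mult power_abs)
    also have "\<dots> \<le> 2 ^ l / fact n * \<bar>s\<bar> ^ n" by (intro mult_right_mono gc_bound) auto
    finally show "norm (gc l n * s ^ n) \<le> 2 ^ l * (inverse (fact n) * \<bar>s\<bar> ^ n)"
      by (simp add: field_simps)
  qed
  show "summable (\<lambda>k. 2 ^ l * (inverse (fact k) * \<bar>s\<bar> ^ k))"
    by (intro summable_mult summable_exp)
qed

lemma gc_r1: "gc (Suc l) k = gc l k / real (2*k+2*l+3)"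
proof -
  define A where "A = (fact (k+l) :: real)"
  define B where "B = (fact (2*k+2*l+1) :: real)"
  define C where "C = (fact k :: real)"
  define p where "p = real (2*k+2*l+3)"
  define t where "t = real (k+l+1)"
  have pos: "A > 0" "B > 0" "C > 0" "p > 0" "t > 0" unfolding A_def B_def C_def p_def t_def by auto
  have e1: "(fact (k + Suc l) :: real) = t * A" unfolding A_def t_def by (simp add: fact_Suc)
  have e2: "(fact (2*k + 2*Suc l + 1) :: real) = p * (2 * t) * B"
    unfolding B_def p_def t_def by (simp add: fact_Suc algebra_simps)
  show ?thesis unfolding gc_def e1 e2 A_def[symmetric] B_def[symmetric] C_def[symmetric] p_def[symmetric]
    using pos by (simp add: field_simps)
qed

lemma gc_r2: "gc l (Suc k) = - gc l k / (2 * real (Suc k) * real (2*k+2*l+3))"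
proof -
  define A where "A = (fact (k+l) :: real)"
  define B where "B = (fact (2*k+2*l+1) :: real)"
  define C where "C = (fact k :: real)"
  define p where "p = real (2*k+2*l+3)"
  define t where "t = real (k+l+1)"
  define r where "r = real (Suc k)"
  have pos: "A > 0" "B > 0" "C > 0" "p > 0" "t > 0" "r > 0" unfolding A_def B_def C_def p_def t_def r_def by auto
  have e1: "(fact (Suc k + l) :: real) = t * A" unfolding A_def t_def by (simp add: fact_Suc)
  have e2: "(fact (2*Suc k + 2*l + 1) :: real) = p * (2 * t) * B"
    unfolding B_def p_def t_def by (simp add: fact_Suc algebra_simps)
  have e3: "(fact (Suc k) :: real) = r * C" unfolding C_def r_def by (simp add: fact_Suc)
  show ?thesis unfolding gc_def e1 e2 e3 A_def[symmetric] B_def[symmetric] C_def[symmetric] p_def[symmetric] r_def[symmetric]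
    using pos by (simp add: field_simps)
qed

lemma diffs_gc: "diffs (gc l) = (\<lambda>n. - (1/2) * gc (Suc l) n)"
proof
  fix n
  define p where "p = real (2*n+2*l+3)"
  define r where "r = real (Suc n)"
  have pos: "p > 0" "r > 0" unfolding p_def r_def by auto
  show "diffs (gc l) n = - (1/2) * gc (Suc l) n"
    unfolding diffs_def gc_r1 gc_r2 p_def[symmetric] r_def[symmetric] of_nat_mult[symmetric]
    using pos by (simp add: field_simps)
qed

lemma G_deriv: "(G l has_real_derivative (- (1/2) * G (Suc l) s)) (at s)"
proof -
  have "(G l has_real_derivative (\<Sum>n. diffs (gc l) n * s ^ n)) (at s)"
    unfolding G_def[abs_def] by (rule termdiffs_strong_converges_everywhere) (rule gc_summable)
  also have "(\<Sum>n. diffs (gc l) n * s ^ n) = (\<Sum>n. - (1/2) * (gc (Suc l) n * s ^ n))"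
    by (simp add: diffs_gc mult.assoc)
  also have "\<dots> = - (1/2) * G (Suc l) s"
    unfolding G_def by (rule suminf_mult) (rule gc_summable)
  finally show ?thesis .
qed

lemma gc_rec: "gc l k = real (2 * l + 3) * gc (Suc l) k - (if k = 0 then 0 else gc (Suc (Suc l)) (k - 1))"
proof (cases k)
  case 0
  define c where "c = real (2*l+3)"
  have "c > 0" unfolding c_def by simp
  have e: "real (2*0+2*l+3) = c" unfolding c_def by simp
  show ?thesis using \<open>c > 0\<close> unfolding 0 gc_r1 e c_def[symmetric] by simp
next
  case (Suc j)
  define c where "c = real (2*l+3)"
  define a where "a = real (Suc j)"
  define p where "p = real (2*j+2*l+3)"
  define q where "q = real (2*j+2*l+5)"
  have pos: "c > 0" "a > 0" "p > 0" "q > 0" unfolding c_def a_def p_def q_def by auto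
  have rel: "c + 2 * a = q" unfolding c_def a_def q_def by simp
  have e1: "real (2*Suc j+2*l+3) = q" unfolding q_def by simp
  have e2: "real (2*j+2*Suc l+3) = q" unfolding q_def by simp
  have g1: "gc (Suc l) (Suc j) = gc l (Suc j) / q" unfolding gc_r1 e1 ..
  have g2: "gc (Suc (Suc l)) j = gc l j / p / q" unfolding gc_r1 e2 p_def ..
  have g3: "gc l (Suc j) = - gc l j / (2 * a * p)" unfolding gc_r2 a_def p_def ..
  have "real (2 * l + 3) * gc (Suc l) k - (if k = 0 then 0 else gc (Suc (Suc l)) (k - 1))
     = c * (gc l (Suc j) / q) - gc l j / p / q"
    unfolding Suc c_def[symmetric] g1 by (simp add: g2)
  also have "\<dots> = gc l (Suc j)"
    unfolding g3
  proof -
    have "c * (- gc l j / (2 * a * p) / q) - gc l j / p / q = - gc l j * (c + 2 * a) / (2 * a * p * q)"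
      using pos by (simp add: field_simps)
    also have "\<dots> = - gc l j / (2 * a * p)" unfolding rel using pos by (simp add: field_simps)
    finally show "c * (- gc l j / (2 * a * p) / q) - gc l j / p / q = - gc l j / (2 * a * p)" .
  qed
  finally show ?thesis using Suc by simp
qed

lemma G_rec: "G l s = real (2 * l + 3) * G (Suc l) s - s * G (Suc (Suc l)) s"
proof -
  have s1: "(\<lambda>k. real (2 * l + 3) * (gc (Suc l) k * s ^ k)) sums (real (2 * l + 3) * G (Suc l) s)"
    unfolding G_def by (intro sums_mult summable_sums gc_summable)
  have s2: "(\<lambda>k. s * (gc (Suc (Suc l)) k * s ^ k)) sums (s * G (Suc (Suc l)) s)"
    unfolding G_def by (intro sums_mult summable_sums gc_summable)
  have s3: "(\<lambda>k. if k = 0 then 0 else s * (gc (Suc (Suc l)) (k - 1) * s ^ (k - 1))) sums (s * G (Suc (Suc l)) s)"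
    using s2 sums_Suc_iff[of "\<lambda>k. if k = 0 then 0 else s * (gc (Suc (Suc l)) (k - 1) * s ^ (k - 1))" "s * G (Suc (Suc l)) s"] by simp
  have "(\<lambda>k. real (2 * l + 3) * (gc (Suc l) k * s ^ k) - (if k = 0 then 0 else s * (gc (Suc (Suc l)) (k - 1) * s ^ (k - 1))))
      sums (real (2 * l + 3) * G (Suc l) s - s * G (Suc (Suc l)) s)"
    by (intro sums_diff s1 s3)
  moreover have "(\<lambda>k. real (2 * l + 3) * (gc (Suc l) k * s ^ k) - (if k = 0 then 0 else s * (gc (Suc (Suc l)) (k - 1) * s ^ (k - 1))))
      = (\<lambda>k. gc l k * s ^ k)"
  proof
    fix k show "real (2 * l + 3) * (gc (Suc l) k * s ^ k) - (if k = 0 then 0 else s * (gc (Suc (Suc l)) (k - 1) * s ^ (k - 1))) = gc l k * s ^ k"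
    proof -
      have "gc l k * s ^ k = (real (2 * l + 3) * gc (Suc l) k - (if k = 0 then 0 else gc (Suc (Suc l)) (k - 1))) * s ^ k"
        using gc_rec[of l k] by (rule arg_cong[where f="\<lambda>x. x * s^k"])
      then show ?thesis by (cases k) (auto simp: algebra_simps)
    qed
  qed
  ultimately show ?thesis unfolding G_def by (simp add: sums_iff)
qed

lemma bessel_G: "sph_bessel_j l x = x ^ l * G l (x\<^sup>2)"
proof -
  have pk: "\<And>k. (x ^ k)\<^sup>2 = (x\<^sup>2) ^ k" by (metis power_mult mult.commute)
  have "sph_bessel_j l x = (\<Sum>k. x ^ l * (gc l k * (x\<^sup>2) ^ k))"
    unfolding sph_bessel_j_def gc_def
    by (rule arg_cong[where f=suminf]) (auto simp: power_add power_mult field_simps pk)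
  also have "\<dots> = x ^ l * G l (x\<^sup>2)" unfolding G_def by (rule suminf_mult) (rule gc_summable)
  finally show ?thesis .
qed

lemma G0: "G l 0 = gc l 0"
  unfolding G_def by (subst suminf_finite[of "{0}"]) auto

lemma gc0_pos: "gc l 0 > 0" unfolding gc_def by simp


abbreviation QQ :: "nat \<Rightarrow> real poly" where "QQ l \<equiv> [:-1, 0, 1:] ^ l"
abbreviation DD :: "nat \<Rightarrow> nat \<Rightarrow> real poly" where "DD l k \<equiv> (pderiv ^^ k) (QQ l)"

lemma pderiv_funpow_zero: "degree (p :: real poly) < k \<Longrightarrow> (pderiv ^^ k) p = 0"
proof (induction k arbitrary: p)
  case 0 then show ?case by simp
next
  case (Suc k)
  have "(pderiv ^^ Suc k) p = (pderiv ^^ k) (pderiv p)" by (simp add: funpow_Suc_right del: funpow.simps)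
  also have "\<dots> = 0"
  proof (cases "degree p = 0")
    case True
    then have "pderiv p = 0" by (simp add: pderiv_eq_0_iff)
    then show ?thesis by (induction k) auto
  next
    case False
    then show ?thesis using Suc by (intro Suc.IH) (simp add: degree_pderiv)
  qed
  finally show ?case .
qed

lemma pderiv_funpow_top: "degree (p :: real poly) = k \<Longrightarrow> (pderiv ^^ k) p = [: fact k * lead_coeff p :]"
proof (induction k arbitrary: p)
  case 0 then show ?case by (auto elim!: degree_eq_zeroE)
next
  case (Suc k)
  have "(pderiv ^^ Suc k) p = (pderiv ^^ k) (pderiv p)" by (simp add: funpow_Suc_right del: funpow.simps)
  also have "\<dots> = [: fact k * lead_coeff (pderiv p) :]" using Suc by (intro Suc.IH) (simp add: degree_pderiv)
  also have "lead_coeff (pderiv p) = real (Suc k) * lead_coeff p"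
    using Suc.prems by (simp add: coeff_pderiv degree_pderiv)
  finally show ?case by (simp add: algebra_simps)
qed

lemma degQ: "degree (QQ l) = 2 * l" by (simp add: degree_power_eq)
lemma leadQ: "lead_coeff (QQ l) = 1" by (simp add: lead_coeff_power)

lemma legendre_zero: "m > l \<Longrightarrow> legendre_deriv_poly l m = 0"
  unfolding legendre_deriv_poly_def by (subst pderiv_funpow_zero) (auto simp: degQ)

lemma legendre_top: "legendre_deriv_poly l l = [: fact (2*l) / (2 ^ l * fact l) :]"
proof -
  have "(pderiv ^^ (l+l)) (QQ l) = [: fact (l+l) * lead_coeff (QQ l) :]"
    by (rule pderiv_funpow_top) (simp add: degQ)
  then show ?thesis unfolding legendre_deriv_poly_def by (simp add: leadQ mult_2)
qed

lemma pderiv_legendre: "pderiv (legendre_deriv_poly l m) = legendre_deriv_poly l (Suc m)"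
  unfolding legendre_deriv_poly_def by (simp add: pderiv_smult)

lemma poly_eqI2: "(\<And>x. poly p x = poly q x) \<Longrightarrow> (p :: real poly) = q"
  by (simp add: poly_eq_poly_eq_iff[symmetric] fun_eq_iff)

lemma S0: "[:-1,0,1:] * pderiv (QQ l) = smult (2 * real l) ([:0,1:] * QQ l)"
proof (cases l)
  case 0 then show ?thesis by simp
next
  case (Suc n)
  show ?thesis unfolding Suc pderiv_power_Suc
    by (rule poly_eqI2) (simp add: pderiv_pCons algebra_simps)
qed

definition TT :: "nat \<Rightarrow> nat \<Rightarrow> real poly" where
  "TT l k = [:-1,0,1:] * DD l (k+2) + smult (2 * (real k + 1 - real l)) ([:0,1:] * DD l (k+1))
      + smult ((real k + 1) * (real k - 2 * real l)) (DD l k)"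

lemma TT_zero: "TT l k = 0"
proof (induction k)
  case 0
  have E: "poly (pderiv ([:-1,0,1:] * pderiv (QQ l))) x = poly (pderiv (smult (2 * real l) ([:0,1:] * QQ l))) x" for x
    by (simp only: S0)
  show ?case
  proof (rule poly_eqI2)
    fix x
    show "poly (TT l 0) x = poly 0 x"
      using E[of x] unfolding TT_def
      by (simp add: pderiv_mult pderiv_smult pderiv_pCons pderiv_diff pderiv_minus numeral_2_eq_2 algebra_simps)
  qed
next
  case (Suc k)
  have "pderiv (TT l k) = 0" using Suc by simp
  moreover have "pderiv (TT l k) = TT l (Suc k)"
    unfolding TT_def
    by (rule poly_eqI2) (simp add: pderiv_mult pderiv_smult pderiv_add pderiv_pCons pderiv_diff pderiv_minus algebra_simps)
  ultimately show ?case by simp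
qed

lemma legendre_ladder:
  assumes "m \<ge> 1"
  shows "(1 - t\<^sup>2) * poly (legendre_deriv_poly l (Suc m)) t - 2 * real m * t * poly (legendre_deriv_poly l m) t
       = - ((real l + real m) * (real l - real m + 1)) * poly (legendre_deriv_poly l (m - 1)) t"
proof -
  obtain k where k: "l + m = Suc k" using assms by (cases "l + m") auto
  have "poly (TT l k) t = 0" by (simp add: TT_zero)
  then have "(t\<^sup>2 - 1) * poly (DD l (k+2)) t + 2 * (real k + 1 - real l) * t * poly (DD l (k+1)) t
      + (real k + 1) * (real k - 2 * real l) * poly (DD l k) t = 0"
    unfolding TT_def by (simp add: algebra_simps power2_eq_square)
  moreover have e: "l + Suc m = Suc (Suc k)" "l + m = Suc k" "l + (m - 1) = k" and r: "real m = real k + 1 - real l"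
    using k assms by auto
  ultimately have key: "(1 - t\<^sup>2) * poly (DD l (Suc (Suc k))) t - 2 * real m * t * poly (DD l (Suc k)) t
       = - ((real l + real m) * (real l - real m + 1)) * poly (DD l k) t"
    unfolding r by (simp add: algebra_simps power2_eq_square)
  define a where "a = 1 / (2 ^ l * fact l :: real)"
  show ?thesis unfolding legendre_deriv_poly_def e poly_smult a_def[symmetric]
    using arg_cong[OF key, of "\<lambda>z. a * z"] by (simp add: algebra_simps)
qed


lemma hd_vec_nth: "((\<lambda>x::real^3. x $ i) has_derivative (\<lambda>h. h $ i)) F"
  by (rule bounded_linear_imp_has_derivative) (rule bounded_linear_vec_nth)

lemma hd_Complex: "((\<lambda>x::real^3. Complex (x$1) (s * x$2)) has_derivative (\<lambda>h. Complex (h$1) (s * h$2))) F"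
  unfolding Complex_eq
  by (rule derivative_eq_intros hd_vec_nth refl)+

lemma pdu_eq:
  assumes "((\<lambda>x. f x v) has_derivative f') (at u)"
  shows "pdu j f u v = f' (axis j 1)"
proof -
  have g: "((\<lambda>t::real. u + t *\<^sub>R axis j 1) has_derivative (\<lambda>t. t *\<^sub>R axis j 1)) (at 0)"
    by (rule derivative_eq_intros refl)+ simp
  have f: "((\<lambda>x. f x v) has_derivative f') (at ((\<lambda>t::real. u + t *\<^sub>R axis j 1) 0))"
    using assms by simp
  have "((\<lambda>t. f (u + t *\<^sub>R axis j 1) v) has_derivative (\<lambda>t. f' (t *\<^sub>R axis j 1))) (at 0)"
    using diff_chain_at[OF g f] by (simp add: o_def)
  moreover have "(\<lambda>t. f' (t *\<^sub>R axis j 1)) = (\<lambda>t. t *\<^sub>R f' (axis j 1))"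
    using has_derivative_bounded_linear[OF assms] by (simp add: linear_simps bounded_linear.linear)
  ultimately have "((\<lambda>t. f (u + t *\<^sub>R axis j 1) v) has_vector_derivative f' (axis j 1)) (at 0)"
    by (simp add: has_vector_derivative_def)
  then show ?thesis unfolding pdu_def by (rule vector_derivative_at)
qed

lemma pdv_eq:
  assumes "((\<lambda>y. f u y) has_derivative f') (at v)"
  shows "pdv j f u v = f' (axis j 1)"
proof -
  have "pdv j f u v = pdu j (\<lambda>a b. f b a) v u" unfolding pdu_def pdv_def ..
  also have "\<dots> = f' (axis j 1)" by (rule pdu_eq) (use assms in simp)
  finally show ?thesis .
qed

lemma ax3: "axis i x $ j = (if j = i then x else (0::real))"
  by (simp add: axis_def)

lemma opA_at0: "opA i j f 0 v = 0" unfolding opA_def by simp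

lemma three_neq: "(1::3) \<noteq> 2" "(1::3) \<noteq> 3" "(2::3) \<noteq> 3" "(2::3) \<noteq> 1" "(3::3) \<noteq> 1" "(3::3) \<noteq> 2"
  by simp_all


definition Yg :: "complex \<Rightarrow> real \<Rightarrow> nat \<Rightarrow> real poly \<Rightarrow> real^3 \<Rightarrow> complex" where
  "Yg K s k P x = K * Complex (x$1) (s * x$2) ^ k * complex_of_real (poly P (x$3))"

definition YgD :: "complex \<Rightarrow> real \<Rightarrow> nat \<Rightarrow> real poly \<Rightarrow> real^3 \<Rightarrow> real^3 \<Rightarrow> complex" where
  "YgD K s k P x = (\<lambda>h. K * (of_nat k * Complex (h$1) (s*h$2) * Complex (x$1) (s*x$2)^(k-1) * complex_of_real (poly P (x$3))
          + Complex (x$1) (s*x$2)^k * complex_of_real (h$3 * poly (pderiv P) (x$3))))"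

lemma hd_Yg: "(Yg K s k P has_derivative YgD K s k P x) (at x)"
proof -
  have p: "((\<lambda>x::real^3. poly P (x$3)) has_derivative (\<lambda>h. h$3 * poly (pderiv P) (x$3))) (at x)"
    by (rule DERIV_compose_FDERIV[OF poly_DERIV hd_vec_nth])
  show ?thesis unfolding Yg_def[abs_def] YgD_def
    by (rule derivative_eq_intros hd_Complex p refl)+ (simp add: algebra_simps)
qed

lemma pdu_Yg: "pdu j (\<lambda>u v. Yg K s k P u) x v = YgD K s k P x (axis j 1)"
  by (rule pdu_eq) (use hd_Yg in simp)

lemma YgD1: "YgD K s k P x (axis 1 1) = K * of_nat k * Complex (x$1) (s*x$2)^(k-1) * complex_of_real (poly P (x$3))"
  unfolding YgD_def by (simp add: ax3 one_complex.code)
lemma YgD2: "YgD K s k P x (axis 2 1) = K * of_nat k * (\<i> * of_real s) * Complex (x$1) (s*x$2)^(k-1) * complex_of_real (poly P (x$3))"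
  unfolding YgD_def by (simp add: ax3 Complex_eq)
lemma YgD3: "YgD K s k P x (axis 3 1) = K * Complex (x$1) (s*x$2)^k * complex_of_real (poly (pderiv P) (x$3))"
  unfolding YgD_def by (simp add: ax3 Complex_eq)

definition Lz :: "phasefun \<Rightarrow> phasefun" where "Lz f = opA 1 2 f"
definition Lp :: "phasefun \<Rightarrow> phasefun" where "Lp f = (\<lambda>u v. opA 2 3 f u v + \<i> * opA 3 1 f u v)"
definition Lm :: "phasefun \<Rightarrow> phasefun" where "Lm f = (\<lambda>u v. opA 2 3 f u v - \<i> * opA 3 1 f u v)"

lemma Lz_pdu: "Lz f u v = - \<i> * (complex_of_real (u$1) * pdu 2 f u v - complex_of_real (u$2) * pdu 1 f u v)"
  unfolding Lz_def opA_def ..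
lemma Lp_pdu: "Lp f u v = - Complex (u$1) (u$2) * pdu 3 f u v + complex_of_real (u$3) * (pdu 1 f u v + \<i> * pdu 2 f u v)"
  unfolding Lp_def opA_def Complex_eq by (simp add: algebra_simps)
lemma Lm_pdu: "Lm f u v = Complex (u$1) (- u$2) * pdu 3 f u v - complex_of_real (u$3) * (pdu 1 f u v - \<i> * pdu 2 f u v)"
  unfolding Lm_def opA_def Complex_eq by (simp add: algebra_simps)

abbreviation "wc s x \<equiv> Complex (x$1) (s * x$2)"
abbreviation "PP P x \<equiv> complex_of_real (poly P (x$3))"

lemma Yg_Lz: "Lz (\<lambda>u v. Yg K s k P u) x v = K * of_nat k * wc s x ^ (k-1) * PP P x * Complex (s * x$1) (x$2)"
  unfolding Lz_pdu pdu_Yg YgD1 YgD2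
  by (simp add: Complex_eq algebra_simps)

lemma Yg_Lp: "Lp (\<lambda>u v. Yg K s k P u) x v = - Complex (x$1) (x$2) * K * wc s x ^ k * PP (pderiv P) x
     + complex_of_real (x$3) * K * of_nat k * (1 - of_real s) * wc s x ^ (k-1) * PP P x"
  unfolding Lp_pdu pdu_Yg YgD1 YgD2 YgD3
  by (simp add: algebra_simps)

lemma Yg_Lm: "Lm (\<lambda>u v. Yg K s k P u) x v = Complex (x$1) (- x$2) * K * wc s x ^ k * PP (pderiv P) x
     - complex_of_real (x$3) * K * of_nat k * (1 + of_real s) * wc s x ^ (k-1) * PP P x"
  unfolding Lm_pdu pdu_Yg YgD1 YgD2 YgD3
  by (simp add: algebra_simps)


lemma hd_normalize:
  assumes u: "(u::real^3) \<noteq> 0"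
  shows "((\<lambda>x. x /\<^sub>R norm x) has_derivative
     (\<lambda>h. inverse (norm u) *\<^sub>R h - (inverse (norm u) * inverse (norm u) * (h \<bullet> sgn u)) *\<^sub>R u)) (at u)"
proof -
  have n: "(norm has_derivative (\<lambda>h. h \<bullet> sgn u)) (at u)" using has_derivative_norm[OF u] .
  have "((\<lambda>x. inverse (norm x) *\<^sub>R x) has_derivative
     (\<lambda>h. inverse (norm u) *\<^sub>R h + (- (inverse (norm u) * (h \<bullet> sgn u) * inverse (norm u))) *\<^sub>R u)) (at u)"
    by (rule derivative_eq_intros n refl | use u in simp)+
  then show ?thesis by (simp add: algebra_simps)
qed

lemma opA_radial:
  assumes u: "u \<noteq> 0"
    and f: "\<And>x. f x v = complex_of_real (\<rho> (norm x)) * Y (x /\<^sub>R norm x) * c"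
    and Y: "(Y has_derivative Y') (at (u /\<^sub>R norm u))"
    and R: "(\<rho> has_real_derivative \<rho>') (at (norm u))"
  shows "opA i j f u v = complex_of_real (\<rho> (norm u)) *
     (- \<i> * (complex_of_real ((u /\<^sub>R norm u)$i) * Y' (axis j 1) - complex_of_real ((u /\<^sub>R norm u)$j) * Y' (axis i 1))) * c"
proof -
  define N' where "N' = (\<lambda>h. inverse (norm u) *\<^sub>R h - (inverse (norm u) * inverse (norm u) * (h \<bullet> sgn u)) *\<^sub>R u)"
  have hN: "((\<lambda>x. x /\<^sub>R norm x) has_derivative N') (at u)" unfolding N'_def by (rule hd_normalize[OF u])
  have hYN: "((\<lambda>x. Y (x /\<^sub>R norm x)) has_derivative (\<lambda>h. Y' (N' h))) (at u)"
    using has_derivative_compose[OF hN Y] .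
  have hR: "((\<lambda>x. \<rho> (norm x)) has_derivative (\<lambda>h. (h \<bullet> sgn u) * \<rho>')) (at u)"
    by (rule DERIV_compose_FDERIV[OF R has_derivative_norm[OF u]])
  define F' where "F' = (\<lambda>h. complex_of_real ((h \<bullet> sgn u) * \<rho>') * Y (u /\<^sub>R norm u) * c
       + complex_of_real (\<rho> (norm u)) * Y' (N' h) * c)"
  have hF: "((\<lambda>x. f x v) has_derivative F') (at u)"
    unfolding f F'_def
    by (rule derivative_eq_intros hR hYN refl)+ (simp add: algebra_simps)
  have lin: "linear Y'" using has_derivative_linear[OF Y] .
  have e: "\<And>k. axis k 1 \<bullet> sgn u = u$k / norm u"
    by (simp add: inner_axis' sgn_div_norm divide_inverse mult.commute)
  have YN: "\<And>k. Y' (N' (axis k 1)) = complex_of_real (inverse (norm u)) * Y' (axis k 1)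
       - complex_of_real (inverse (norm u) * inverse (norm u) * (u$k / norm u)) * Y' u"
    unfolding N'_def e by (simp add: linear_diff[OF lin] linear_scale[OF lin]) (simp add: scaleR_conv_of_real divide_inverse mult.commute)
  have pd: "\<And>k. pdu k f u v = F' (axis k 1)" by (rule pdu_eq[where f=f, OF hF])
  show ?thesis
    unfolding opA_def pd F'_def YN e using u
    by (simp add: field_simps)
qed


lemma bessel_deriv: "\<exists>D. ((\<lambda>r. sph_bessel_j l (r * a)) has_real_derivative D) (at r)"
proof -
  have "((\<lambda>r. (r * a) ^ l * G l ((r * a)\<^sup>2)) has_real_derivative
     (of_nat l * (1 * a) * (r * a) ^ (l - 1) * G l ((r * a)\<^sup>2) + (r * a) ^ l * ((- (1/2) * G (Suc l) ((r*a)\<^sup>2)) * (of_nat 2 * (r*a) ^ (2 - 1) * (1 * a))))) (at r)"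
    by (rule derivative_eq_intros DERIV_chain2[OF G_deriv] refl)+ (simp add: algebra_simps)
  then show ?thesis unfolding bessel_G by blast
qed

lemma bessel_at0: "l \<ge> 1 \<Longrightarrow> sph_bessel_j l 0 = 0"
  unfolding bessel_G by simp

lemma sph_harm_pos: "0 \<le> m \<Longrightarrow> sph_harm l m = Yg ((-1) ^ nat m * complex_of_real (sph_norm l (nat m))) 1 (nat m) (legendre_deriv_poly l (nat m))"
  unfolding sph_harm_def[abs_def] Yg_def by auto

lemma sph_harm_neg: "m < 0 \<Longrightarrow> sph_harm l m = Yg (complex_of_real (sph_norm l (nat (- m)))) (-1) (nat (- m)) (legendre_deriv_poly l (nat (- m)))"
  unfolding sph_harm_def[abs_def] Yg_def by auto

lemma sph_harm_deriv: "\<exists>D. (sph_harm l m has_derivative D) (at x)"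
  by (cases "0 \<le> m") (auto simp: sph_harm_pos sph_harm_neg intro: hd_Yg)

lemma Psi_opA:
  assumes u: "u \<noteq> 0"
  shows "opA i j (Psi l m n) u v = complex_of_real (sph_bessel_j l (norm u * norm v))
      * opA i j (\<lambda>u v. sph_harm l m u) (u /\<^sub>R norm u) v * sph_harm l n (v /\<^sub>R norm v)"
proof -
  obtain Y' where Y: "(sph_harm l m has_derivative Y') (at (u /\<^sub>R norm u))" using sph_harm_deriv by blast
  obtain D where R: "((\<lambda>r. sph_bessel_j l (r * norm v)) has_real_derivative D) (at (norm u))" using bessel_deriv by blast
  have "opA i j (Psi l m n) u v = complex_of_real (sph_bessel_j l (norm u * norm v)) *
     (- \<i> * (complex_of_real ((u /\<^sub>R norm u)$i) * Y' (axis j 1) - complex_of_real ((u /\<^sub>R norm u)$j) * Y' (axis i 1)))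
      * sph_harm l n (v /\<^sub>R norm v)"
    by (rule opA_radial[OF u _ Y R]) (simp add: Psi_def)
  moreover have "opA i j (\<lambda>u v. sph_harm l m u) (u /\<^sub>R norm u) v =
     - \<i> * (complex_of_real ((u /\<^sub>R norm u)$i) * Y' (axis j 1) - complex_of_real ((u /\<^sub>R norm u)$j) * Y' (axis i 1))"
    unfolding opA_def by (simp add: pdu_eq[OF Y])
  ultimately show ?thesis by simp
qed

lemma Psi_Lz_gen: "u \<noteq> 0 \<Longrightarrow> Lz (Psi l m n) u v = complex_of_real (sph_bessel_j l (norm u * norm v))
      * Lz (\<lambda>u v. sph_harm l m u) (u /\<^sub>R norm u) v * sph_harm l n (v /\<^sub>R norm v)"
  unfolding Lz_def by (rule Psi_opA)

lemma Psi_Lp_gen: "u \<noteq> 0 \<Longrightarrow> Lp (Psi l m n) u v = complex_of_real (sph_bessel_j l (norm u * norm v))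
      * Lp (\<lambda>u v. sph_harm l m u) (u /\<^sub>R norm u) v * sph_harm l n (v /\<^sub>R norm v)"
  unfolding Lp_def by (simp add: Psi_opA algebra_simps)

lemma Psi_Lm_gen: "u \<noteq> 0 \<Longrightarrow> Lm (Psi l m n) u v = complex_of_real (sph_bessel_j l (norm u * norm v))
      * Lm (\<lambda>u v. sph_harm l m u) (u /\<^sub>R norm u) v * sph_harm l n (v /\<^sub>R norm v)"
  unfolding Lm_def by (simp add: Psi_opA algebra_simps)


abbreviation NN where "NN l k \<equiv> sph_norm l k"

lemma NN_pos: "NN l k > 0"
  unfolding sph_norm_def by (intro real_sqrt_gt_zero divide_pos_pos mult_pos_pos) auto

definition kp :: "nat \<Rightarrow> int \<Rightarrow> real" where
  "kp l m = (if 0 \<le> m then NN l (nat m) / NN l (Suc (nat m))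
     else NN l (nat (-m)) * (real l + real (nat (-m))) * (real l - real (nat (-m)) + 1) / NN l (nat (-m) - 1))"

definition km :: "nat \<Rightarrow> int \<Rightarrow> real" where
  "km l m = (if 0 < m then NN l (nat m) * (real l + real (nat m)) * (real l - real (nat m) + 1) / NN l (nat m - 1)
     else NN l (nat (-m)) / NN l (Suc (nat (-m))))"

lemma unit3: "norm (x::real^3) = 1 \<Longrightarrow> (x$1)\<^sup>2 + (x$2)\<^sup>2 + (x$3)\<^sup>2 = 1"
  by (simp add: norm_eq_sqrt_inner inner_vec_def sum_3 power2_eq_square)

lemma Cconj_mult: "Complex a (- b) * Complex a b = complex_of_real (a\<^sup>2 + b\<^sup>2)"
  by (simp add: complex_eq_iff power2_eq_square)

lemma Y_Lz: "Lz (\<lambda>u v. sph_harm l m u) x v = of_int m * sph_harm l m x"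
proof (cases "0 \<le> m")
  case True
  show ?thesis
  proof (cases "nat m")
    case 0
    then have "m = 0" using True by simp
    then show ?thesis unfolding sph_harm_pos[OF True] Yg_Lz by (simp add: Yg_def)
  next
    case (Suc j)
    have m: "m = int (Suc j)" using Suc True by simp
    show ?thesis unfolding sph_harm_pos[OF True] unfolding Yg_Lz unfolding Yg_def Suc
      by (simp add: m algebra_simps)
  qed
next
  case False
  define k where "k = nat (- m)"
  have F: "m < 0" using False by simp
  obtain j where kj: "k = Suc j" using F unfolding k_def by (cases "nat (-m)") auto
  have m: "m = - int (Suc j)" using F kj unfolding k_def by simp
  have w: "Complex (- x$1) (x$2) = - Complex (x$1) (- x$2)" by (simp add: complex_eq_iff)
  show ?thesis unfolding sph_harm_neg[OF F] unfolding Yg_Lz unfolding Yg_def k_def[symmetric] kj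
    by (simp add: m w algebra_simps)
qed


lemma Cconj_mult': "Complex a b * Complex a (- b) = complex_of_real (a\<^sup>2 + b\<^sup>2)"
  by (simp add: complex_eq_iff power2_eq_square)

lemma leg_ladder_C:
  assumes "k \<ge> 1" "(x$1)\<^sup>2 + (x$2)\<^sup>2 + (x$3)\<^sup>2 = 1"
  shows "complex_of_real ((x$1)\<^sup>2 + (x$2)\<^sup>2) * PP (legendre_deriv_poly l (Suc k)) x - 2 * of_nat k * complex_of_real (x$3) * PP (legendre_deriv_poly l k) x
     = - complex_of_real ((real l + real k) * (real l - real k + 1)) * PP (legendre_deriv_poly l (k - 1)) x"
proof -
  have e: "(x$1)\<^sup>2 + (x$2)\<^sup>2 = 1 - (x$3)\<^sup>2" using assms(2) by simp
  have "(1 - (x$3)\<^sup>2) * poly (legendre_deriv_poly l (Suc k)) (x$3) - 2 * real k * (x$3) * poly (legendre_deriv_poly l k) (x$3)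
     = - ((real l + real k) * (real l - real k + 1)) * poly (legendre_deriv_poly l (k - 1)) (x$3)"
    by (rule legendre_ladder[OF assms(1)])
  then have "complex_of_real ((1 - (x$3)\<^sup>2) * poly (legendre_deriv_poly l (Suc k)) (x$3) - 2 * real k * (x$3) * poly (legendre_deriv_poly l k) (x$3))
     = complex_of_real (- ((real l + real k) * (real l - real k + 1)) * poly (legendre_deriv_poly l (k - 1)) (x$3))"
    by simp
  then show ?thesis unfolding e by (simp add: algebra_simps)
qed

lemma Y_Lp:
  assumes ml: "\<bar>m\<bar> \<le> int l" and x: "(x$1)\<^sup>2 + (x$2)\<^sup>2 + (x$3)\<^sup>2 = 1"
  shows "Lp (\<lambda>u v. sph_harm l m u) x v = complex_of_real (kp l m) * sph_harm l (m + 1) x"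
proof (cases "0 \<le> m")
  case True
  define k where "k = nat m"
  have m1: "0 \<le> m + 1" "nat (m + 1) = Suc k" using True unfolding k_def by auto
  have N: "NN l (Suc k) \<noteq> 0" using NN_pos[of l "Suc k"] by simp
  have L: "Lp (\<lambda>u v. sph_harm l m u) x v = - ((-1) ^ k * complex_of_real (NN l k)) * Complex (x$1) (x$2) ^ Suc k * PP (legendre_deriv_poly l (Suc k)) x"
    unfolding sph_harm_pos[OF True] unfolding Yg_Lp unfolding k_def[symmetric] pderiv_legendre by simp
  have R: "sph_harm l (m + 1) x = (-1) ^ Suc k * complex_of_real (NN l (Suc k)) * Complex (x$1) (x$2) ^ Suc k * PP (legendre_deriv_poly l (Suc k)) x"
    unfolding sph_harm_pos[OF m1(1)] Yg_def m1(2) by simp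
  have kk: "kp l m = NN l k / NN l (Suc k)" unfolding kp_def k_def using True by simp
  show ?thesis unfolding L R kk using N by (simp add: field_simps)
next
  case False
  define k where "k = nat (-m)"
  have F: "m < 0" using False by simp
  obtain j where kj: "k = Suc j" using F unfolding k_def by (cases "nat (-m)") auto
  have kl: "k \<le> l" using ml F unfolding k_def by simp
  have N: "NN l j \<noteq> 0" using NN_pos[of l j] by simp
  have LHS: "Lp (\<lambda>u v. sph_harm l m u) x v = - complex_of_real (NN l k) * Complex (x$1) (- x$2) ^ j *
      (complex_of_real ((x$1)\<^sup>2 + (x$2)\<^sup>2) * PP (legendre_deriv_poly l (Suc k)) x - 2 * of_nat k * complex_of_real (x$3) * PP (legendre_deriv_poly l k) x)"
  proof -
    have "Lp (\<lambda>u v. sph_harm l m u) x v = - Complex (x$1) (x$2) * complex_of_real (NN l k) * Complex (x$1) (- x$2) ^ k * PP (legendre_deriv_poly l (Suc k)) x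
     + complex_of_real (x$3) * complex_of_real (NN l k) * of_nat k * 2 * Complex (x$1) (- x$2) ^ (k-1) * PP (legendre_deriv_poly l k) x"
      unfolding sph_harm_neg[OF F] unfolding Yg_Lp k_def[symmetric] pderiv_legendre by simp
    also have "\<dots> = - complex_of_real (NN l k) * Complex (x$1) (- x$2) ^ j *
      ((Complex (x$1) (x$2) * Complex (x$1) (- x$2)) * PP (legendre_deriv_poly l (Suc k)) x - 2 * of_nat k * complex_of_real (x$3) * PP (legendre_deriv_poly l k) x)"
      unfolding kj by (simp add: algebra_simps)
    finally show ?thesis unfolding Cconj_mult' .
  qed
  have RHS: "sph_harm l (m + 1) x = complex_of_real (NN l j) * Complex (x$1) (- x$2) ^ j * PP (legendre_deriv_poly l j) x"
  proof (cases "m + 1 < 0")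
    case True
    have "nat (- (m + 1)) = j" using kj unfolding k_def by simp
    then show ?thesis unfolding sph_harm_neg[OF True] Yg_def by simp
  next
    case False
    then have "m + 1 = 0" "j = 0" using F kj unfolding k_def by auto
    then show ?thesis unfolding sph_harm_def by simp
  qed
  have E: "complex_of_real ((x$1)\<^sup>2 + (x$2)\<^sup>2) * PP (legendre_deriv_poly l (Suc k)) x - 2 * of_nat k * complex_of_real (x$3) * PP (legendre_deriv_poly l k) x
     = - complex_of_real ((real l + real k) * (real l - real k + 1)) * PP (legendre_deriv_poly l j) x"
    using leg_ladder_C[OF _ x, of k l] kj by simp
  have kk: "kp l m = NN l k * ((real l + real k) * (real l - real k + 1)) / NN l j"
    unfolding kp_def k_def[symmetric] using F kj by simp
  show ?thesis unfolding LHS E unfolding RHS kk using N by (simp add: field_simps)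
qed


lemma Y_Lm:
  assumes ml: "\<bar>m\<bar> \<le> int l" and x: "(x$1)\<^sup>2 + (x$2)\<^sup>2 + (x$3)\<^sup>2 = 1"
  shows "Lm (\<lambda>u v. sph_harm l m u) x v = complex_of_real (km l m) * sph_harm l (m - 1) x"
proof (cases "0 < m")
  case True
  define k where "k = nat m"
  have T: "0 \<le> m" using True by simp
  obtain j where kj: "k = Suc j" using True unfolding k_def by (cases "nat m") auto
  have m1: "0 \<le> m - 1" "nat (m - 1) = j" using True kj unfolding k_def by auto
  have N: "NN l j \<noteq> 0" using NN_pos[of l j] by simp
  have LHS: "Lm (\<lambda>u v. sph_harm l m u) x v = (-1) ^ k * complex_of_real (NN l k) * Complex (x$1) (x$2) ^ j *
      (complex_of_real ((x$1)\<^sup>2 + (x$2)\<^sup>2) * PP (legendre_deriv_poly l (Suc k)) x - 2 * of_nat k * complex_of_real (x$3) * PP (legendre_deriv_poly l k) x)"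
  proof -
    have "Lm (\<lambda>u v. sph_harm l m u) x v = Complex (x$1) (- x$2) * ((-1) ^ k * complex_of_real (NN l k)) * Complex (x$1) (x$2) ^ k * PP (legendre_deriv_poly l (Suc k)) x
     - complex_of_real (x$3) * ((-1) ^ k * complex_of_real (NN l k)) * of_nat k * 2 * Complex (x$1) (x$2) ^ (k-1) * PP (legendre_deriv_poly l k) x"
      unfolding sph_harm_pos[OF T] unfolding Yg_Lm k_def[symmetric] pderiv_legendre by simp
    also have "\<dots> = (-1) ^ k * complex_of_real (NN l k) * Complex (x$1) (x$2) ^ j *
      ((Complex (x$1) (- x$2) * Complex (x$1) (x$2)) * PP (legendre_deriv_poly l (Suc k)) x - 2 * of_nat k * complex_of_real (x$3) * PP (legendre_deriv_poly l k) x)"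
      unfolding kj by (simp add: algebra_simps)
    finally show ?thesis unfolding Cconj_mult .
  qed
  have RHS: "sph_harm l (m - 1) x = (-1) ^ j * complex_of_real (NN l j) * Complex (x$1) (x$2) ^ j * PP (legendre_deriv_poly l j) x"
    unfolding sph_harm_pos[OF m1(1)] Yg_def m1(2) by simp
  have E: "complex_of_real ((x$1)\<^sup>2 + (x$2)\<^sup>2) * PP (legendre_deriv_poly l (Suc k)) x - 2 * of_nat k * complex_of_real (x$3) * PP (legendre_deriv_poly l k) x
     = - complex_of_real ((real l + real k) * (real l - real k + 1)) * PP (legendre_deriv_poly l j) x"
    using leg_ladder_C[OF _ x, of k l] kj by simp
  have kk: "km l m = NN l k * ((real l + real k) * (real l - real k + 1)) / NN l j"
    unfolding km_def k_def[symmetric] using True kj by simp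
  show ?thesis unfolding LHS E unfolding RHS kk unfolding kj using N by (simp add: field_simps)
next
  case False
  define k where "k = nat (-m)"
  have m1: "m - 1 < 0" "nat (- (m - 1)) = Suc k" using False unfolding k_def by auto
  have N: "NN l (Suc k) \<noteq> 0" using NN_pos[of l "Suc k"] by simp
  have LHS: "Lm (\<lambda>u v. sph_harm l m u) x v = complex_of_real (NN l k) * Complex (x$1) (- x$2) ^ Suc k * PP (legendre_deriv_poly l (Suc k)) x"
  proof (cases "m = 0")
    case True
    then have k0: "k = 0" unfolding k_def by simp
    show ?thesis unfolding True sph_harm_pos[of 0, simplified] unfolding Yg_Lm k0 pderiv_legendre by simp
  next
    case F: False
    then have F: "m < 0" using False by simp
    show ?thesis unfolding sph_harm_neg[OF F] unfolding Yg_Lm k_def[symmetric] pderiv_legendre by simp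
  qed
  show ?thesis unfolding LHS sph_harm_neg[OF m1(1)] m1(2) Yg_def km_def
    using False N unfolding k_def[symmetric] by (simp add: field_simps)
qed


lemma Psi_hasderiv:
  assumes u: "u \<noteq> 0"
  shows "\<exists>D. ((\<lambda>x. Psi l m n x v) has_derivative D) (at u)"
proof -
  obtain Y' where Y: "(sph_harm l m has_derivative Y') (at (u /\<^sub>R norm u))" using sph_harm_deriv by blast
  obtain D where R: "((\<lambda>r. sph_bessel_j l (r * norm v)) has_real_derivative D) (at (norm u))" using bessel_deriv by blast
  define N' where "N' = (\<lambda>h. inverse (norm u) *\<^sub>R h - (inverse (norm u) * inverse (norm u) * (h \<bullet> sgn u)) *\<^sub>R u)"
  have hN: "((\<lambda>x. x /\<^sub>R norm x) has_derivative N') (at u)" unfolding N'_def by (rule hd_normalize[OF u])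
  have hYN: "((\<lambda>x. sph_harm l m (x /\<^sub>R norm x)) has_derivative (\<lambda>h. Y' (N' h))) (at u)"
    using has_derivative_compose[OF hN Y] .
  have hR: "((\<lambda>x. sph_bessel_j l (norm x * norm v)) has_derivative (\<lambda>h. (h \<bullet> sgn u) * D)) (at u)"
    by (rule DERIV_compose_FDERIV[OF R has_derivative_norm[OF u]])
  show ?thesis unfolding Psi_def
    by (rule exI) (rule derivative_eq_intros hR hYN refl)+
qed

lemma pdu_sum:
  assumes S: "finite S" and d: "\<And>x. x \<in> S \<Longrightarrow> ((\<lambda>y. g x y v) has_derivative D x) (at u)"
  shows "pdu j (\<lambda>u v. \<Sum>x\<in>S. c x * g x u v) u v = (\<Sum>x\<in>S. c x * pdu j (g x) u v)"
proof -
  have "((\<lambda>y. \<Sum>x\<in>S. c x * g x y v) has_derivative (\<lambda>h. \<Sum>x\<in>S. c x * D x h)) (at u)"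
    by (rule derivative_eq_intros d refl | assumption)+
  then have "pdu j (\<lambda>u v. \<Sum>x\<in>S. c x * g x u v) u v = (\<Sum>x\<in>S. c x * D x (axis j 1))" by (rule pdu_eq)
  also have "\<dots> = (\<Sum>x\<in>S. c x * pdu j (g x) u v)"
  proof (rule sum.cong)
    fix x assume x: "x \<in> S"
    show "c x * D x (axis j 1) = c x * pdu j (g x) u v" using pdu_eq[where f="g x", OF d[OF x]] by simp
  qed simp
  finally show ?thesis .
qed

lemma opA_sum:
  assumes S: "finite S"
  shows "opA i j (\<lambda>u v. \<Sum>x\<in>S. c x * Psi (L x) (M x) (N x) u v) u v = (\<Sum>x\<in>S. c x * opA i j (Psi (L x) (M x) (N x)) u v)"
proof (cases "u = 0")
  case True then show ?thesis by (simp add: opA_at0)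
next
  case False
  have d: "\<exists>D. ((\<lambda>y. Psi (L x) (M x) (N x) y v) has_derivative D) (at u)" for x
    using Psi_hasderiv[OF False] .
  then obtain D where D: "\<And>x. ((\<lambda>y. Psi (L x) (M x) (N x) y v) has_derivative D x) (at u)" by metis
  have R: "(\<Sum>x\<in>S. c x * opA i j (Psi (L x) (M x) (N x)) u v) =
     (- \<i> * complex_of_real (u$i)) * (\<Sum>x\<in>S. c x * pdu j (Psi (L x) (M x) (N x)) u v)
     - (- \<i> * complex_of_real (u$j)) * (\<Sum>x\<in>S. c x * pdu i (Psi (L x) (M x) (N x)) u v)"
    unfolding opA_def sum_distrib_left sum_subtractf[symmetric] by (rule sum.cong) (simp_all add: algebra_simps)
  show ?thesis unfolding R unfolding opA_def pdu_sum[where g="\<lambda>x. Psi (L x) (M x) (N x)", OF S D, of _ c]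
    by (simp add: algebra_simps)
qed


lemma unit_normalize: fixes u :: "real^3" shows "u \<noteq> 0 \<Longrightarrow> ((u /\<^sub>R norm u)$1)\<^sup>2 + ((u /\<^sub>R norm u)$2)\<^sup>2 + ((u /\<^sub>R norm u)$3)\<^sup>2 = 1"
  by (rule unit3) simp

lemma Psi_at0: "l \<ge> 1 \<Longrightarrow> Psi l m n 0 v = 0"
  unfolding Psi_def by (simp add: bessel_at0)

lemma sph_harm_zero: "nat \<bar>m\<bar> > l \<Longrightarrow> sph_harm l m = (\<lambda>x. 0)"
  unfolding sph_harm_def by (auto simp: legendre_zero)

lemma Psi_zero: "nat \<bar>m\<bar> > l \<Longrightarrow> Psi l m n = (\<lambda>u v. 0)"
  unfolding Psi_def by (simp add: sph_harm_zero)

lemma Lz_at0: "Lz f 0 v = 0" unfolding Lz_def by (simp add: opA_at0)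
lemma Lp_at0: "Lp f 0 v = 0" unfolding Lp_def by (simp add: opA_at0)
lemma Lm_at0: "Lm f 0 v = 0" unfolding Lm_def by (simp add: opA_at0)

lemma Psi_Lz: assumes "\<bar>m\<bar> \<le> int l" shows "Lz (Psi l m n) = (\<lambda>u v. of_int m * Psi l m n u v)"
proof (intro ext)
  fix u v
  show "Lz (Psi l m n) u v = of_int m * Psi l m n u v"
  proof (cases "u = 0")
    case True
    show ?thesis
    proof (cases "l = 0")
      case True then have "m = 0" using assms by simp
      then show ?thesis using \<open>u = 0\<close> by (simp add: Lz_at0)
    next
      case False then show ?thesis using \<open>u = 0\<close> by (simp add: Lz_at0 Psi_at0)
    qed
  next
    case False
    then show ?thesis unfolding Psi_Lz_gen[OF False] Y_Lz by (simp add: Psi_def)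
  qed
qed

lemma Psi_Lp: assumes "\<bar>m\<bar> \<le> int l" shows "Lp (Psi l m n) = (\<lambda>u v. of_real (kp l m) * Psi l (m + 1) n u v)"
proof (intro ext)
  fix u v
  show "Lp (Psi l m n) u v = of_real (kp l m) * Psi l (m + 1) n u v"
  proof (cases "u = 0")
    case True
    show ?thesis
    proof (cases "l = 0")
      case True then have "m = 0" using assms by simp
      then have "Psi l (m + 1) n = (\<lambda>u v. 0)" using \<open>l = 0\<close> by (intro Psi_zero) simp
      then show ?thesis using \<open>u = 0\<close> by (simp add: Lp_at0)
    next
      case False then show ?thesis using \<open>u = 0\<close> by (simp add: Lp_at0 Psi_at0)
    qed
  next
    case False
    then show ?thesis unfolding Psi_Lp_gen[OF False] Y_Lp[OF assms unit_normalize[OF False]] by (simp add: Psi_def)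
  qed
qed

lemma Psi_Lm: assumes "\<bar>m\<bar> \<le> int l" shows "Lm (Psi l m n) = (\<lambda>u v. of_real (km l m) * Psi l (m - 1) n u v)"
proof (intro ext)
  fix u v
  show "Lm (Psi l m n) u v = of_real (km l m) * Psi l (m - 1) n u v"
  proof (cases "u = 0")
    case True
    show ?thesis
    proof (cases "l = 0")
      case True then have "m = 0" using assms by simp
      then have "Psi l (m - 1) n = (\<lambda>u v. 0)" using \<open>l = 0\<close> by (intro Psi_zero) simp
      then show ?thesis using \<open>u = 0\<close> by (simp add: Lm_at0)
    next
      case False then show ?thesis using \<open>u = 0\<close> by (simp add: Lm_at0 Psi_at0)
    qed
  next
    case False
    then show ?thesis unfolding Psi_Lm_gen[OF False] Y_Lm[OF assms unit_normalize[OF False]] by (simp add: Psi_def)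
  qed
qed

lemma NN_nz: "NN l k \<noteq> 0" using NN_pos[of l k] by simp

lemma kp_nz: "\<bar>m\<bar> \<le> int l \<Longrightarrow> kp l m \<noteq> 0"
  unfolding kp_def by (auto simp: of_nat_diff NN_nz)

lemma km_nz: "\<bar>m\<bar> \<le> int l \<Longrightarrow> km l m \<noteq> 0"
  unfolding km_def by (auto simp: of_nat_diff NN_nz)

definition Mz :: "phasefun \<Rightarrow> phasefun" where "Mz f = opB 1 2 f"
definition Mp :: "phasefun \<Rightarrow> phasefun" where "Mp f = (\<lambda>u v. opB 2 3 f u v + \<i> * opB 3 1 f u v)"
definition Mm :: "phasefun \<Rightarrow> phasefun" where "Mm f = (\<lambda>u v. opB 2 3 f u v - \<i> * opB 3 1 f u v)"

definition swp :: "phasefun \<Rightarrow> phasefun" where "swp f = (\<lambda>u v. f v u)"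

lemma opB_swp: "opB i j f u v = opA i j (swp f) v u"
  unfolding opB_def opA_def pdu_def pdv_def swp_def ..

lemma Psi_swp: "swp (Psi l m n) = Psi l n m"
  unfolding swp_def Psi_def by (auto simp: fun_eq_iff mult.commute mult.left_commute)

lemma Psi_Mz: assumes "\<bar>n\<bar> \<le> int l" shows "Mz (Psi l m n) = (\<lambda>u v. of_int n * Psi l m n u v)"
proof (intro ext)
  fix u v
  have "Mz (Psi l m n) u v = Lz (Psi l n m) v u" unfolding Mz_def Lz_def opB_swp Psi_swp ..
  also have "\<dots> = of_int n * Psi l n m v u" unfolding Psi_Lz[OF assms] ..
  also have "Psi l n m v u = Psi l m n u v" using Psi_swp[of l m n] unfolding swp_def by metis
  finally show "Mz (Psi l m n) u v = of_int n * Psi l m n u v" .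
qed

lemma Psi_Mp: assumes "\<bar>n\<bar> \<le> int l" shows "Mp (Psi l m n) = (\<lambda>u v. of_real (kp l n) * Psi l m (n + 1) u v)"
proof (intro ext)
  fix u v
  have "Mp (Psi l m n) u v = Lp (Psi l n m) v u" unfolding Mp_def Lp_def opB_swp Psi_swp ..
  also have "\<dots> = of_real (kp l n) * Psi l (n + 1) m v u" unfolding Psi_Lp[OF assms] ..
  also have "Psi l (n + 1) m v u = Psi l m (n + 1) u v" using Psi_swp[of l m "n+1"] unfolding swp_def by metis
  finally show "Mp (Psi l m n) u v = of_real (kp l n) * Psi l m (n + 1) u v" .
qed

lemma Psi_Mm: assumes "\<bar>n\<bar> \<le> int l" shows "Mm (Psi l m n) = (\<lambda>u v. of_real (km l n) * Psi l m (n - 1) u v)"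
proof (intro ext)
  fix u v
  have "Mm (Psi l m n) u v = Lm (Psi l n m) v u" unfolding Mm_def Lm_def opB_swp Psi_swp ..
  also have "\<dots> = of_real (km l n) * Psi l (n - 1) m v u" unfolding Psi_Lm[OF assms] ..
  also have "Psi l (n - 1) m v u = Psi l m (n - 1) u v" using Psi_swp[of l m "n-1"] unfolding swp_def by metis
  finally show "Mm (Psi l m n) u v = of_real (km l n) * Psi l m (n - 1) u v" .
qed


lemma hd_sq: "((\<lambda>x::real^3. (norm x)\<^sup>2) has_derivative (\<lambda>h. 2 * (a \<bullet> h))) (at a)"
  using has_derivative_sqnorm_at[of a] by simp

lemma opC_gen:
  fixes u v :: "real^3"
  assumes g: "\<And>s. (g has_real_derivative g1 s) (at s)" and g1: "\<And>s. (g1 has_real_derivative g2 s) (at s)"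
    and A: "\<And>x. (A has_derivative DA x) (at x)" and B: "\<And>x. (B has_derivative DB x) (at x)"
  shows "opC i j (\<lambda>u v. complex_of_real (g ((norm u)\<^sup>2 * (norm v)\<^sup>2)) * A u * B v) u v =
     complex_of_real (u$i * v$j) * (complex_of_real (g ((norm u)\<^sup>2 * (norm v)\<^sup>2)) * A u * B v)
   + complex_of_real (g2 ((norm u)\<^sup>2 * (norm v)\<^sup>2) * (2 * u$i * (norm v)\<^sup>2) * ((norm u)\<^sup>2 * (2 * v$j))
        + g1 ((norm u)\<^sup>2 * (norm v)\<^sup>2) * (2 * u$i) * (2 * v$j)) * A u * B v
   + complex_of_real (g1 ((norm u)\<^sup>2 * (norm v)\<^sup>2) * ((norm u)\<^sup>2 * (2 * v$j))) * DA u (axis i 1) * B v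
   + complex_of_real (g1 ((norm u)\<^sup>2 * (norm v)\<^sup>2) * (2 * u$i * (norm v)\<^sup>2)) * A u * DB v (axis j 1)
   + complex_of_real (g ((norm u)\<^sup>2 * (norm v)\<^sup>2)) * DA u (axis i 1) * DB v (axis j 1)"
proof -
  define E1 where "E1 = (\<lambda>u v. complex_of_real (g1 ((norm u)\<^sup>2 * (norm v)\<^sup>2) * ((norm u)\<^sup>2 * (2 * v$j))) * A u * B v
      + complex_of_real (g ((norm u)\<^sup>2 * (norm v)\<^sup>2)) * A u * DB v (axis j 1))"
  have s1: "pdv j (\<lambda>u v. complex_of_real (g ((norm u)\<^sup>2 * (norm v)\<^sup>2)) * A u * B v) = E1"
  proof (intro ext)
    fix u v :: "real^3"
    have sq: "((\<lambda>y. (norm u)\<^sup>2 * (norm y)\<^sup>2) has_derivative (\<lambda>h. (norm u)\<^sup>2 * (2 * (v \<bullet> h)))) (at v)"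
      using hd_sq[of v] by (rule has_derivative_mult_right)
    have gg: "((\<lambda>y. g ((norm u)\<^sup>2 * (norm y)\<^sup>2)) has_derivative (\<lambda>h. (norm u)\<^sup>2 * (2 * (v \<bullet> h)) * g1 ((norm u)\<^sup>2 * (norm v)\<^sup>2))) (at v)"
      by (rule DERIV_compose_FDERIV[OF g sq])
    have "((\<lambda>y. complex_of_real (g ((norm u)\<^sup>2 * (norm y)\<^sup>2)) * A u * B y) has_derivative
       (\<lambda>h. complex_of_real ((norm u)\<^sup>2 * (2 * (v \<bullet> h)) * g1 ((norm u)\<^sup>2 * (norm v)\<^sup>2)) * A u * B v
           + complex_of_real (g ((norm u)\<^sup>2 * (norm v)\<^sup>2)) * A u * DB v h)) (at v)"
      by (rule derivative_eq_intros gg B refl)+ (simp add: algebra_simps)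
    from pdv_eq[where f="\<lambda>u v. complex_of_real (g ((norm u)\<^sup>2 * (norm v)\<^sup>2)) * A u * B v", OF this]
    show "pdv j (\<lambda>u v. complex_of_real (g ((norm u)\<^sup>2 * (norm v)\<^sup>2)) * A u * B v) u v = E1 u v"
      unfolding E1_def by (simp add: inner_axis algebra_simps)
  qed
  have squ: "((\<lambda>x. (norm x)\<^sup>2 * (norm v)\<^sup>2) has_derivative (\<lambda>h. 2 * (u \<bullet> h) * (norm v)\<^sup>2)) (at u)"
    using hd_sq[of u] by (rule has_derivative_mult_left)
  have g1d: "((\<lambda>x. g1 ((norm x)\<^sup>2 * (norm v)\<^sup>2)) has_derivative (\<lambda>h. 2 * (u \<bullet> h) * (norm v)\<^sup>2 * g2 ((norm u)\<^sup>2 * (norm v)\<^sup>2))) (at u)"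
    by (rule DERIV_compose_FDERIV[OF g1 squ])
  have gd: "((\<lambda>x. g ((norm x)\<^sup>2 * (norm v)\<^sup>2)) has_derivative (\<lambda>h. 2 * (u \<bullet> h) * (norm v)\<^sup>2 * g1 ((norm u)\<^sup>2 * (norm v)\<^sup>2))) (at u)"
    by (rule DERIV_compose_FDERIV[OF g squ])
  have "((\<lambda>x. E1 x v) has_derivative
     (\<lambda>h. complex_of_real (2 * (u \<bullet> h) * (norm v)\<^sup>2 * g2 ((norm u)\<^sup>2 * (norm v)\<^sup>2) * ((norm u)\<^sup>2 * (2 * v$j))
              + g1 ((norm u)\<^sup>2 * (norm v)\<^sup>2) * (2 * (u \<bullet> h) * (2 * v$j))) * A u * B v
        + complex_of_real (g1 ((norm u)\<^sup>2 * (norm v)\<^sup>2) * ((norm u)\<^sup>2 * (2 * v$j))) * DA u h * B v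
        + complex_of_real (2 * (u \<bullet> h) * (norm v)\<^sup>2 * g1 ((norm u)\<^sup>2 * (norm v)\<^sup>2)) * A u * DB v (axis j 1)
        + complex_of_real (g ((norm u)\<^sup>2 * (norm v)\<^sup>2)) * DA u h * DB v (axis j 1))) (at u)"
    unfolding E1_def
    by (rule derivative_eq_intros g1d gd A hd_sq refl)+ (simp add: algebra_simps)
  from pdu_eq[where f=E1, OF this, of i]
  show ?thesis unfolding opC_def s1
    by (simp add: inner_axis algebra_simps)
qed


abbreviation wA :: "real^3 \<Rightarrow> complex" where "wA x \<equiv> Complex (x$1) (x$2)"

definition FF :: "nat \<Rightarrow> phasefun" where
  "FF l = (\<lambda>u v. complex_of_real (G l ((norm u)\<^sup>2 * (norm v)\<^sup>2)) * wA u ^ l * wA v ^ l)"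

definition Cup :: "phasefun \<Rightarrow> phasefun" where
  "Cup f = (\<lambda>u v. opC 1 1 f u v + \<i> * opC 1 2 f u v + \<i> * opC 2 1 f u v - opC 2 2 f u v)"
definition Cdn :: "phasefun \<Rightarrow> phasefun" where
  "Cdn f = (\<lambda>u v. opC 1 1 f u v - \<i> * opC 1 2 f u v - \<i> * opC 2 1 f u v - opC 2 2 f u v)"

lemma G_deriv2: "((\<lambda>s. - (1/2) * G (Suc l) s) has_real_derivative (1/4) * G (Suc (Suc l)) s) (at s)"
  using DERIV_cmult[OF G_deriv[of "Suc l" s], of "- (1/2)"] by simp

lemma hd_wpow: "((\<lambda>x::real^3. wA x ^ l) has_derivative (\<lambda>h. of_nat l * Complex (h$1) (h$2) * wA x ^ (l - 1))) (at x)"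
  using has_derivative_power[OF hd_Complex[of 1], of l] by simp

lemma opC_FF: fixes u v :: "real^3" shows "opC i j (FF l) u v =
     complex_of_real (u$i * v$j) * (complex_of_real (G l ((norm u)\<^sup>2 * (norm v)\<^sup>2)) * wA u ^ l * wA v ^ l)
   + complex_of_real ((1/4) * G (Suc (Suc l)) ((norm u)\<^sup>2 * (norm v)\<^sup>2) * (2 * u$i * (norm v)\<^sup>2) * ((norm u)\<^sup>2 * (2 * v$j))
        + (- (1/2) * G (Suc l) ((norm u)\<^sup>2 * (norm v)\<^sup>2)) * (2 * u$i) * (2 * v$j)) * wA u ^ l * wA v ^ l
   + complex_of_real ((- (1/2) * G (Suc l) ((norm u)\<^sup>2 * (norm v)\<^sup>2)) * ((norm u)\<^sup>2 * (2 * v$j))) * (of_nat l * Complex (axis i 1 $ 1) (axis i 1 $ 2) * wA u ^ (l - 1)) * wA v ^ l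
   + complex_of_real ((- (1/2) * G (Suc l) ((norm u)\<^sup>2 * (norm v)\<^sup>2)) * (2 * u$i * (norm v)\<^sup>2)) * wA u ^ l * (of_nat l * Complex (axis j 1 $ 1) (axis j 1 $ 2) * wA v ^ (l - 1))
   + complex_of_real (G l ((norm u)\<^sup>2 * (norm v)\<^sup>2)) * (of_nat l * Complex (axis i 1 $ 1) (axis i 1 $ 2) * wA u ^ (l - 1)) * (of_nat l * Complex (axis j 1 $ 1) (axis j 1 $ 2) * wA v ^ (l - 1))"
  unfolding FF_def by (rule opC_gen[OF G_deriv G_deriv2 hd_wpow hd_wpow])


lemma Cup_FF: "Cup (FF l) = (\<lambda>u v. of_nat (2*l+1) * FF (Suc l) u v)"
proof (intro ext)
  fix u v :: "real^3"
  define a where "a = (norm u)\<^sup>2"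
  define b where "b = (norm v)\<^sup>2"
  have rec: "G l (a * b) = real (2 * l + 3) * G (Suc l) (a * b) - (a * b) * G (Suc (Suc l)) (a * b)"
    by (rule G_rec)
  show "Cup (FF l) u v = of_nat (2*l+1) * FF (Suc l) u v"
  proof (cases l)
    case 0
    show ?thesis unfolding Cup_def opC_FF unfolding FF_def a_def[symmetric] b_def[symmetric] 0
      by (simp add: ax3 Complex_eq algebra_simps rec[unfolded 0])
  next
    case (Suc k)
    show ?thesis unfolding Cup_def opC_FF unfolding FF_def a_def[symmetric] b_def[symmetric] Suc
      by (simp add: ax3 Complex_eq algebra_simps rec[unfolded Suc])
  qed
qed


definition XX :: "nat \<Rightarrow> phasefun" where
  "XX l = (\<lambda>u v. complex_of_real (G (Suc l) ((norm u)\<^sup>2 * (norm v)\<^sup>2)) * wA u ^ (l - 1) * complex_of_real ((norm u)\<^sup>2 - real (2*l+1) * (u$3)\<^sup>2)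
      * wA v ^ (l - 1) * complex_of_real ((norm v)\<^sup>2 - real (2*l+1) * (v$3)\<^sup>2))"

lemma norm3: "(norm (x::real^3))\<^sup>2 = (x$1)\<^sup>2 + (x$2)\<^sup>2 + (x$3)\<^sup>2"
  by (simp add: norm_eq_sqrt_inner inner_vec_def sum_3 power2_eq_square)

lemma Cdn_FF: fixes u v :: "real^3" shows "of_nat (2*k+3) * Cdn (FF (Suc k)) u v = of_nat (4 * (Suc k)\<^sup>2) * FF k u v + XX (Suc k) u v"
proof -
  define a where "a = (norm u)\<^sup>2"
  define b where "b = (norm v)\<^sup>2"
  have u3: "(u$3)\<^sup>2 = a - (u$1)\<^sup>2 - (u$2)\<^sup>2" unfolding a_def norm3 by simp
  have v3: "(v$3)\<^sup>2 = b - (v$1)\<^sup>2 - (v$2)\<^sup>2" unfolding b_def norm3 by simp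
  have r1: "G (Suc k) (a * b) = real (2 * k + 5) * G (Suc (Suc k)) (a * b) - (a * b) * G (Suc (Suc (Suc k))) (a * b)"
    using G_rec[of "Suc k" "a*b"] by simp
  have r0: "G k (a * b) = real (2 * k + 3) * G (Suc k) (a * b) - (a * b) * G (Suc (Suc k)) (a * b)"
    by (rule G_rec)
  show ?thesis unfolding Cdn_def opC_FF unfolding FF_def XX_def a_def[symmetric] b_def[symmetric] u3 v3 r0
    unfolding r1
    by (simp add: ax3 Complex_eq algebra_simps power2_eq_square)
qed


lemma Psi_nz:
  assumes "u \<noteq> 0" "v \<noteq> 0"
  shows "Psi L m n u v = complex_of_real (G L ((norm u)\<^sup>2 * (norm v)\<^sup>2) * (norm u) ^ L * (norm v) ^ L)
     * sph_harm L m (u /\<^sub>R norm u) * sph_harm L n (v /\<^sub>R norm v)"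
  unfolding Psi_def bessel_G by (simp add: power_mult_distrib)

lemma wA_normalize: "wA (u /\<^sub>R norm u) = wA u / complex_of_real (norm u)"
  by (cases "u = 0") (simp_all add: complex_eq_iff field_simps)

lemma C00: "Complex 0 0 = 0" by (simp add: complex_eq_iff)

lemma leg_top_val: "poly (legendre_deriv_poly l l) t = fact (2*l) / (2 ^ l * fact l)"
  unfolding legendre_top by simp

definition cL :: "nat \<Rightarrow> real" where "cL l = fact (2*l) / (2 ^ l * fact l)"

lemma cL_pos: "cL l > 0" unfolding cL_def by simp

lemma sph_top: "sph_harm l (int l) x = complex_of_real ((-1) ^ l * NN l l * cL l) * wA x ^ l"
  unfolding sph_harm_def cL_def by (simp add: leg_top_val)

definition cc :: "nat \<Rightarrow> real" where "cc l = (NN l l * cL l)\<^sup>2"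

lemma cc_pos: "cc l > 0" unfolding cc_def using NN_pos[of l l] cL_pos[of l] by simp

lemma Psi_top: "Psi l (int l) (int l) = (\<lambda>u v. complex_of_real (cc l) * FF l u v)"
proof (intro ext)
  fix u v :: "real^3"
  show "Psi l (int l) (int l) u v = complex_of_real (cc l) * FF l u v"
  proof (cases "u = 0 \<or> v = 0")
    case True
    show ?thesis
    proof (cases l)
      case 0
      then show ?thesis using True
        using sph_top[of 0] by (auto simp: Psi_def FF_def cc_def bessel_G power2_eq_square)
    next
      case (Suc k)
      then show ?thesis using True
        by (auto simp: Psi_def FF_def sph_top cc_def bessel_G C00)
    qed
  next
    case False
    then have u: "u \<noteq> 0" and v: "v \<noteq> 0" by auto
    have nu: "norm u \<noteq> 0" "norm v \<noteq> 0" using u v by auto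
    show ?thesis unfolding Psi_nz[OF u v] sph_top wA_normalize FF_def cc_def
      using nu by (simp add: power_divide field_simps power_mult_distrib power2_eq_square)
  qed
qed


lemma leg_top_cL: "poly (legendre_deriv_poly l l) t = cL l"
  unfolding leg_top_val cL_def ..

lemma leg_sub1: "poly (legendre_deriv_poly (Suc (Suc k)) (Suc k)) t = t * cL (Suc (Suc k))"
proof -
  have z: "poly (legendre_deriv_poly (Suc (Suc k)) (Suc (Suc (Suc k)))) t = 0"
    by (simp add: legendre_zero)
  have "(1 - t\<^sup>2) * poly (legendre_deriv_poly (Suc (Suc k)) (Suc (Suc (Suc k)))) t
     - 2 * real (Suc (Suc k)) * t * poly (legendre_deriv_poly (Suc (Suc k)) (Suc (Suc k))) t
     = - ((real (Suc (Suc k)) + real (Suc (Suc k))) * (real (Suc (Suc k)) - real (Suc (Suc k)) + 1))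
       * poly (legendre_deriv_poly (Suc (Suc k)) (Suc (Suc k) - 1)) t"
    by (rule legendre_ladder) simp
  then have "real (2*k+4) * poly (legendre_deriv_poly (Suc (Suc k)) (Suc k)) t = real (2*k+4) * (t * cL (Suc (Suc k)))"
    unfolding z leg_top_cL by (simp add: algebra_simps)
  then show ?thesis by simp
qed

lemma leg_sub2: "poly (legendre_deriv_poly (Suc (Suc k)) k) t = cL (Suc (Suc k)) / (2 * real (2*k+3)) * (real (2*k+3) * t\<^sup>2 - 1)"
proof -
  have "(1 - t\<^sup>2) * poly (legendre_deriv_poly (Suc (Suc k)) (Suc (Suc k))) t
     - 2 * real (Suc k) * t * poly (legendre_deriv_poly (Suc (Suc k)) (Suc k)) t
     = - ((real (Suc (Suc k)) + real (Suc k)) * (real (Suc (Suc k)) - real (Suc k) + 1))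
       * poly (legendre_deriv_poly (Suc (Suc k)) (Suc k - 1)) t"
    by (rule legendre_ladder) simp
  then have "(1 - t\<^sup>2) * cL (Suc (Suc k)) - 2 * real (Suc k) * t * (t * cL (Suc (Suc k)))
     = - (real (2*k+3) * 2) * poly (legendre_deriv_poly (Suc (Suc k)) k) t"
    unfolding leg_sub1 leg_top_cL by (simp add: algebra_simps)
  then show ?thesis by (simp add: field_simps power2_eq_square)
qed

definition cx :: "nat \<Rightarrow> real" where "cx k = (NN (Suc (Suc k)) k * cL (Suc (Suc k)) / (2 * real (2*k+3)))\<^sup>2"

lemma cx_pos: "cx k > 0" unfolding cx_def using NN_pos[of "Suc (Suc k)" k] cL_pos[of "Suc (Suc k)"] by simp

lemma sph_sub2: "sph_harm (Suc (Suc k)) (int k) x = complex_of_real ((-1) ^ k * NN (Suc (Suc k)) k * (cL (Suc (Suc k)) / (2 * real (2*k+3))))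
    * wA x ^ k * complex_of_real (real (2*k+3) * (x$3)\<^sup>2 - 1)"
  unfolding sph_harm_def by (simp add: leg_sub2)

lemma Psi_sub2: "Psi (Suc (Suc k)) (int k) (int k) = (\<lambda>u v. complex_of_real (cx k) * XX (Suc k) u v)"
proof (intro ext)
  fix u v :: "real^3"
  show "Psi (Suc (Suc k)) (int k) (int k) u v = complex_of_real (cx k) * XX (Suc k) u v"
  proof (cases "u = 0 \<or> v = 0")
    case True
    then show ?thesis
      by (cases k) (auto simp: Psi_def XX_def bessel_G C00)
  next
    case False
    then have u: "u \<noteq> 0" and v: "v \<noteq> 0" by auto
    have nu: "norm u \<noteq> 0" "norm v \<noteq> 0" using u v by auto
    define K where "K = (-1) ^ k * NN (Suc (Suc k)) k * (cL (Suc (Suc k)) / (2 * real (2*k+3)))"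
    have KK: "K * K = cx k" unfolding K_def cx_def by (simp add: power2_eq_square algebra_simps flip: power_add mult_2)
    have h: "complex_of_real (norm x ^ Suc (Suc k)) * ((wA x / complex_of_real (norm x)) ^ k * complex_of_real (real (2*k+3) * ((x /\<^sub>R norm x)$3)\<^sup>2 - 1))
        = - (wA x ^ k * complex_of_real ((norm x)\<^sup>2 - real (2*k+3) * (x$3)\<^sup>2))" if x: "x \<noteq> 0" for x :: "real^3"
    proof -
      have nx: "norm x \<noteq> 0" using x by simp
      have "complex_of_real (norm x ^ Suc (Suc k)) * ((wA x / complex_of_real (norm x)) ^ k * complex_of_real (real (2*k+3) * ((x /\<^sub>R norm x)$3)\<^sup>2 - 1))
        = wA x ^ k * (complex_of_real (norm x ^ Suc (Suc k) / norm x ^ k * (real (2*k+3) * (x$3 / norm x)\<^sup>2 - 1)))"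
        using nx by (simp add: power_divide field_simps)
      also have "norm x ^ Suc (Suc k) / norm x ^ k * (real (2*k+3) * (x$3 / norm x)\<^sup>2 - 1) = - ((norm x)\<^sup>2 - real (2*k+3) * (x$3)\<^sup>2)"
        using nx by (simp add: field_simps power2_eq_square)
      finally show ?thesis by (simp add: algebra_simps)
    qed
    have "Psi (Suc (Suc k)) (int k) (int k) u v = complex_of_real (G (Suc (Suc k)) ((norm u)\<^sup>2 * (norm v)\<^sup>2)) * complex_of_real K * complex_of_real K
       * (complex_of_real (norm u ^ Suc (Suc k)) * ((wA u / complex_of_real (norm u)) ^ k * complex_of_real (real (2*k+3) * ((u /\<^sub>R norm u)$3)\<^sup>2 - 1)))
       * (complex_of_real (norm v ^ Suc (Suc k)) * ((wA v / complex_of_real (norm v)) ^ k * complex_of_real (real (2*k+3) * ((v /\<^sub>R norm v)$3)\<^sup>2 - 1)))"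
      unfolding Psi_nz[OF u v] sph_sub2 wA_normalize K_def[symmetric] by (simp add: algebra_simps)
    also have "\<dots> = complex_of_real (K * K) * XX (Suc k) u v"
      unfolding h[OF u] h[OF v] XX_def by (simp add: algebra_simps)
    finally show ?thesis unfolding KK .
  qed
qed


definition PS :: "(nat \<times> int \<times> int) set \<Rightarrow> (nat \<times> int \<times> int \<Rightarrow> complex) \<Rightarrow> phasefun" where
  "PS T d = (\<lambda>u v. \<Sum>s\<in>T. d s * Psi (fst s) (fst (snd s)) (snd (snd s)) u v)"

lemma Lz_sum: "finite S \<Longrightarrow> Lz (\<lambda>u v. \<Sum>x\<in>S. c x * Psi (L x) (M x) (N x) u v) u v = (\<Sum>x\<in>S. c x * Lz (Psi (L x) (M x) (N x)) u v)"
  unfolding Lz_def by (rule opA_sum)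

lemma Lp_sum: "finite S \<Longrightarrow> Lp (\<lambda>u v. \<Sum>x\<in>S. c x * Psi (L x) (M x) (N x) u v) u v = (\<Sum>x\<in>S. c x * Lp (Psi (L x) (M x) (N x)) u v)"
  unfolding Lp_def by (simp add: opA_sum sum_distrib_left sum.distrib algebra_simps)

lemma Lm_sum: "finite S \<Longrightarrow> Lm (\<lambda>u v. \<Sum>x\<in>S. c x * Psi (L x) (M x) (N x) u v) u v = (\<Sum>x\<in>S. c x * Lm (Psi (L x) (M x) (N x)) u v)"
  unfolding Lm_def by (simp add: opA_sum sum_distrib_left sum_subtractf algebra_simps)

lemma opB_sum:
  assumes S: "finite S"
  shows "opB i j (\<lambda>u v. \<Sum>x\<in>S. c x * Psi (L x) (M x) (N x) u v) u v = (\<Sum>x\<in>S. c x * opB i j (Psi (L x) (M x) (N x)) u v)"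
proof -
  have pt: "\<And>l m n u v. Psi l m n v u = Psi l n m u v" using Psi_swp unfolding swp_def by metis
  have sw: "swp (\<lambda>u v. \<Sum>x\<in>S. c x * Psi (L x) (M x) (N x) u v) = (\<lambda>u v. \<Sum>x\<in>S. c x * Psi (L x) (N x) (M x) u v)"
    unfolding swp_def proof (intro ext sum.cong refl)
    fix u v x
    show "c x * Psi (L x) (M x) (N x) v u = c x * Psi (L x) (N x) (M x) u v" by (simp only: pt[of "L x" "M x" "N x" v u])
  qed
  show ?thesis unfolding opB_swp sw opA_sum[OF S] Psi_swp ..
qed

lemma Mz_sum: "finite S \<Longrightarrow> Mz (\<lambda>u v. \<Sum>x\<in>S. c x * Psi (L x) (M x) (N x) u v) u v = (\<Sum>x\<in>S. c x * Mz (Psi (L x) (M x) (N x)) u v)"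
  unfolding Mz_def by (rule opB_sum)

lemma pdu_zero: "pdu j (\<lambda>u v. 0) u v = 0"
  by (rule pdu_eq[where f'="\<lambda>h. 0", simplified]) simp

lemma Lp_zero: "Lp (\<lambda>u v. 0) u v = 0"
  unfolding Lp_def opA_def pdu_zero by simp

lemma valid_m: "(l, m, n) \<in> Psi_index \<Longrightarrow> \<bar>m\<bar> \<le> int l" unfolding Psi_index_def by auto
lemma valid_n: "(l, m, n) \<in> Psi_index \<Longrightarrow> \<bar>n\<bar> \<le> int l" unfolding Psi_index_def by auto

lemma diag_Lz:
  assumes "finite T" "T \<subseteq> Psi_index"
  shows "Lz (PS T d) = PS T (\<lambda>s. d s * of_int (fst (snd s)))"
proof (intro ext)
  fix u v
  show "Lz (PS T d) u v = PS T (\<lambda>s. d s * of_int (fst (snd s))) u v"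
    unfolding PS_def Lz_sum[OF assms(1)]
  proof (rule sum.cong)
    fix s assume "s \<in> T"
    then have "\<bar>fst (snd s)\<bar> \<le> int (fst s)" using assms(2) valid_m[of "fst s" "fst (snd s)" "snd (snd s)"] by auto
    then show "d s * Lz (Psi (fst s) (fst (snd s)) (snd (snd s))) u v = d s * of_int (fst (snd s)) * Psi (fst s) (fst (snd s)) (snd (snd s)) u v"
      by (simp add: Psi_Lz)
  qed simp
qed

lemma diag_Mz:
  assumes "finite T" "T \<subseteq> Psi_index"
  shows "Mz (PS T d) = PS T (\<lambda>s. d s * of_int (snd (snd s)))"
proof (intro ext)
  fix u v
  show "Mz (PS T d) u v = PS T (\<lambda>s. d s * of_int (snd (snd s))) u v"
    unfolding PS_def Mz_sum[OF assms(1)]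
  proof (rule sum.cong)
    fix s assume "s \<in> T"
    then have "\<bar>snd (snd s)\<bar> \<le> int (fst s)" using assms(2) valid_n[of "fst s" "fst (snd s)" "snd (snd s)"] by auto
    then show "d s * Mz (Psi (fst s) (fst (snd s)) (snd (snd s))) u v = d s * of_int (snd (snd s)) * Psi (fst s) (fst (snd s)) (snd (snd s)) u v"
      by (simp add: Psi_Mz)
  qed simp
qed

definition lam :: "nat \<Rightarrow> int \<Rightarrow> real" where "lam l m = (real l + real_of_int m) * (real l - real_of_int m + 1)"

lemma km_kp: "\<bar>m\<bar> \<le> int l \<Longrightarrow> - int l < m \<Longrightarrow> km l m * kp l (m - 1) = lam l m"
proof (cases "0 < m")
  case True
  have a: "km l m = NN l (nat m) * (real l + real (nat m)) * (real l - real (nat m) + 1) / NN l (nat m - 1)"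
    unfolding km_def using True by simp
  have b: "kp l (m - 1) = NN l (nat m - 1) / NN l (nat m)"
    unfolding kp_def using True by (simp add: nat_diff_distrib)
  have c: "real (nat m) = real_of_int m" using True by simp
  show ?thesis unfolding a b lam_def c using NN_nz[of l] by (simp add: field_simps)
next
  case False
  define k where "k = nat (- m)"
  have a: "km l m = NN l k / NN l (Suc k)" unfolding km_def k_def using False by simp
  have e: "nat (- (m - 1)) = Suc k" unfolding k_def using False by simp
  have b: "kp l (m - 1) = NN l (Suc k) * (real l + real (Suc k)) * (real l - real (Suc k) + 1) / NN l k"
    unfolding kp_def e using False by simp
  have c: "real k = - real_of_int m" unfolding k_def using False by simp
  show ?thesis unfolding a b lam_def using NN_nz[of l] c by (simp add: field_simps)
qed

lemma LpLm_Psi: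
  assumes "\<bar>m\<bar> \<le> int l"
  shows "Lp (Lm (Psi l m n)) u v = of_real (lam l m) * Psi l m n u v"
proof (cases "m = - int l")
  case True
  have z: "Psi l (m - 1) n = (\<lambda>u v. 0)" using True by (intro Psi_zero) simp
  have "Lm (Psi l m n) = (\<lambda>u v. 0)" unfolding Psi_Lm[OF assms] z by simp
  then show ?thesis using True by (simp add: Lp_zero lam_def)
next
  case False
  then have m1: "\<bar>m - 1\<bar> \<le> int l" "- int l < m" using assms by auto
  have "Lp (Lm (Psi l m n)) u v = of_real (km l m) * Lp (Psi l (m - 1) n) u v"
    unfolding Psi_Lm[OF assms] using Lp_sum[of "{()}" "\<lambda>_. of_real (km l m)" "\<lambda>_. l" "\<lambda>_. m - 1" "\<lambda>_. n" u v]
    by simp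
  also have "\<dots> = of_real (km l m * kp l (m - 1)) * Psi l m n u v"
    unfolding Psi_Lp[OF m1(1)] by simp
  finally show ?thesis unfolding km_kp[OF assms m1(2)] .
qed

lemma diag_LpLm:
  assumes "finite T" "T \<subseteq> Psi_index"
  shows "Lp (Lm (PS T d)) = PS T (\<lambda>s. d s * of_real (lam (fst s) (fst (snd s))))"
proof (intro ext)
  fix u v
  have e: "Lm (PS T d) = (\<lambda>u v. \<Sum>s\<in>T. (d s * of_real (km (fst s) (fst (snd s)))) * Psi (fst s) (fst (snd s) - 1) (snd (snd s)) u v)"
  proof (intro ext)
    fix u v
    show "Lm (PS T d) u v = (\<Sum>s\<in>T. (d s * of_real (km (fst s) (fst (snd s)))) * Psi (fst s) (fst (snd s) - 1) (snd (snd s)) u v)"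
      unfolding PS_def Lm_sum[OF assms(1)]
    proof (rule sum.cong)
      fix s assume "s \<in> T"
      then have "\<bar>fst (snd s)\<bar> \<le> int (fst s)" using assms(2) valid_m[of "fst s" "fst (snd s)" "snd (snd s)"] by auto
      then show "d s * Lm (Psi (fst s) (fst (snd s)) (snd (snd s))) u v = (d s * of_real (km (fst s) (fst (snd s)))) * Psi (fst s) (fst (snd s) - 1) (snd (snd s)) u v"
        by (simp add: Psi_Lm)
    qed simp
  qed
  show "Lp (Lm (PS T d)) u v = PS T (\<lambda>s. d s * of_real (lam (fst s) (fst (snd s)))) u v"
    unfolding e unfolding Lp_sum[OF assms(1)] unfolding PS_def
  proof (rule sum.cong)
    fix s assume "s \<in> T"
    then have v: "\<bar>fst (snd s)\<bar> \<le> int (fst s)" using assms(2) valid_m[of "fst s" "fst (snd s)" "snd (snd s)"] by auto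
    have "Lp (Psi (fst s) (fst (snd s) - 1) (snd (snd s))) u v = Lp (Lm (Psi (fst s) (fst (snd s)) (snd (snd s)))) u v / of_real (km (fst s) (fst (snd s)))"
      unfolding Psi_Lm[OF v] using Lp_sum[of "{()}" "\<lambda>_. of_real (km (fst s) (fst (snd s)))" "\<lambda>_. fst s" "\<lambda>_. fst (snd s) - 1" "\<lambda>_. snd (snd s)" u v]
      using km_nz[OF v] by simp
    then show "d s * of_real (km (fst s) (fst (snd s))) * Lp (Psi (fst s) (fst (snd s) - 1) (snd (snd s))) u v =
          d s * of_real (lam (fst s) (fst (snd s))) * Psi (fst s) (fst (snd s)) (snd (snd s)) u v"
      unfolding LpLm_Psi[OF v] using km_nz[OF v] by simp
  qed simp
qed


lemma cs_zero: "complex_subspace W \<Longrightarrow> (\<lambda>u v. 0) \<in> W"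
  unfolding complex_subspace_def by blast
lemma cs_add: "complex_subspace W \<Longrightarrow> f \<in> W \<Longrightarrow> g \<in> W \<Longrightarrow> (\<lambda>u v. f u v + g u v) \<in> W"
  unfolding complex_subspace_def by blast
lemma cs_smult: "complex_subspace W \<Longrightarrow> f \<in> W \<Longrightarrow> (\<lambda>u v. c * f u v) \<in> W"
  unfolding complex_subspace_def by blast
lemma cs_lin: "complex_subspace W \<Longrightarrow> f \<in> W \<Longrightarrow> g \<in> W \<Longrightarrow> (\<lambda>u v. a * f u v + b * g u v) \<in> W"
  using cs_add[of W "\<lambda>u v. a * f u v" "\<lambda>u v. b * g u v"] cs_smult by blast
lemma cs_unscale:
  assumes "complex_subspace W" "(\<lambda>u v. c * f u v) \<in> W" "c \<noteq> 0"
  shows "f \<in> W"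
proof -
  have "(\<lambda>u v. inverse c * (c * f u v)) \<in> W" by (rule cs_smult[OF assms(1,2)])
  moreover have "(\<lambda>u v. inverse c * (c * f u v)) = f" using assms(3) by (simp add: fun_eq_iff)
  ultimately show ?thesis by simp
qed
lemma cs_eq: "f \<in> W \<Longrightarrow> f = g \<Longrightarrow> g \<in> W" by simp

lemma cs_sum:
  assumes cs: "complex_subspace W" and fin: "finite S" and g: "\<And>x. x \<in> S \<Longrightarrow> g x \<in> W"
  shows "(\<lambda>u v. \<Sum>x\<in>S. c x * g x u v) \<in> W"
  using fin g
proof (induction S rule: finite_induct)
  case empty then show ?case using cs_zero[OF cs] by simp
next
  case (insert x F)
  have "(\<lambda>u v. c x * g x u v + 1 * (\<Sum>x\<in>F. c x * g x u v)) \<in> W"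
    by (rule cs_lin[OF cs]) (use insert in auto)
  then show ?case using insert by simp
qed

definition INV :: "phasefun set \<Rightarrow> bool" where
  "INV W \<longleftrightarrow> (\<forall>i j. \<forall>f\<in>W. opA i j f \<in> W \<and> opB i j f \<in> W \<and> opC i j f \<in> W)"

context
  fixes W :: "phasefun set"
  assumes cs: "complex_subspace W" and inv: "INV W"
begin

lemma WA: "f \<in> W \<Longrightarrow> opA i j f \<in> W" using inv unfolding INV_def by blast
lemma WB: "f \<in> W \<Longrightarrow> opB i j f \<in> W" using inv unfolding INV_def by blast
lemma WC: "f \<in> W \<Longrightarrow> opC i j f \<in> W" using inv unfolding INV_def by blast

lemma W_Lz: "f \<in> W \<Longrightarrow> Lz f \<in> W" unfolding Lz_def by (rule WA)
lemma W_Mz: "f \<in> W \<Longrightarrow> Mz f \<in> W" unfolding Mz_def by (rule WB)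
lemma W_Lp: "f \<in> W \<Longrightarrow> Lp f \<in> W"
proof -
  assume f: "f \<in> W"
  have "(\<lambda>u v. 1 * opA 2 3 f u v + \<i> * opA 3 1 f u v) \<in> W" by (rule cs_lin[OF cs WA WA]) (use f in auto)
  then show ?thesis unfolding Lp_def by (simp add: algebra_simps)
qed
lemma W_Lm: "f \<in> W \<Longrightarrow> Lm f \<in> W"
proof -
  assume f: "f \<in> W"
  have "(\<lambda>u v. 1 * opA 2 3 f u v + (- \<i>) * opA 3 1 f u v) \<in> W" by (rule cs_lin[OF cs WA WA]) (use f in auto)
  then show ?thesis unfolding Lm_def by (simp add: algebra_simps)
qed
lemma W_Mp: "f \<in> W \<Longrightarrow> Mp f \<in> W"
proof -
  assume f: "f \<in> W"
  have "(\<lambda>u v. 1 * opB 2 3 f u v + \<i> * opB 3 1 f u v) \<in> W" by (rule cs_lin[OF cs WB WB]) (use f in auto)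
  then show ?thesis unfolding Mp_def by (simp add: algebra_simps)
qed
lemma W_Mm: "f \<in> W \<Longrightarrow> Mm f \<in> W"
proof -
  assume f: "f \<in> W"
  have "(\<lambda>u v. 1 * opB 2 3 f u v + (- \<i>) * opB 3 1 f u v) \<in> W" by (rule cs_lin[OF cs WB WB]) (use f in auto)
  then show ?thesis unfolding Mm_def by (simp add: algebra_simps)
qed
lemma W_Cup: "f \<in> W \<Longrightarrow> Cup f \<in> W"
proof -
  assume f: "f \<in> W"
  have a: "(\<lambda>u v. 1 * opC 1 1 f u v + \<i> * opC 1 2 f u v) \<in> W" by (rule cs_lin[OF cs WC WC]) (use f in auto)
  have b: "(\<lambda>u v. \<i> * opC 2 1 f u v + (-1) * opC 2 2 f u v) \<in> W" by (rule cs_lin[OF cs WC WC]) (use f in auto)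
  have "(\<lambda>u v. 1 * (1 * opC 1 1 f u v + \<i> * opC 1 2 f u v) + 1 * (\<i> * opC 2 1 f u v + (-1) * opC 2 2 f u v)) \<in> W"
    by (rule cs_lin[OF cs a b])
  then show ?thesis unfolding Cup_def by (simp add: algebra_simps)
qed
lemma W_Cdn: "f \<in> W \<Longrightarrow> Cdn f \<in> W"
proof -
  assume f: "f \<in> W"
  have a: "(\<lambda>u v. 1 * opC 1 1 f u v + (- \<i>) * opC 1 2 f u v) \<in> W" by (rule cs_lin[OF cs WC WC]) (use f in auto)
  have b: "(\<lambda>u v. (- \<i>) * opC 2 1 f u v + (-1) * opC 2 2 f u v) \<in> W" by (rule cs_lin[OF cs WC WC]) (use f in auto)
  have "(\<lambda>u v. 1 * (1 * opC 1 1 f u v + (- \<i>) * opC 1 2 f u v) + 1 * ((- \<i>) * opC 2 1 f u v + (-1) * opC 2 2 f u v)) \<in> W"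
    by (rule cs_lin[OF cs a b])
  then show ?thesis unfolding Cdn_def by (simp add: algebra_simps)
qed

lemma proj:
  assumes D: "\<And>f. f \<in> W \<Longrightarrow> D f \<in> W" and fin: "finite T"
    and diag: "\<And>d. D (PS T d) = PS T (\<lambda>s. d s * \<phi> s)"
    and start: "PS T d \<in> W" and finL: "finite \<Lambda>"
  shows "PS T (\<lambda>s. d s * (\<Prod>\<mu>\<in>\<Lambda>. (\<phi> s - \<mu>))) \<in> W"
  using finL
proof (induction \<Lambda> rule: finite_induct)
  case empty then show ?case using start by simp
next
  case (insert \<mu> F)
  define d' where "d' = (\<lambda>s. d s * (\<Prod>\<mu>\<in>F. (\<phi> s - \<mu>)))"
  have "D (PS T d') \<in> W" using D insert.IH unfolding d'_def by blast
  then have "PS T (\<lambda>s. d' s * \<phi> s) \<in> W" unfolding diag .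
  then have "(\<lambda>u v. 1 * PS T (\<lambda>s. d' s * \<phi> s) u v + (- \<mu>) * PS T d' u v) \<in> W"
    using insert.IH unfolding d'_def by (intro cs_lin[OF cs]) auto
  moreover have "(\<lambda>u v. 1 * PS T (\<lambda>s. d' s * \<phi> s) u v + (- \<mu>) * PS T d' u v) = PS T (\<lambda>s. d s * (\<Prod>\<mu>\<in>insert \<mu> F. (\<phi> s - \<mu>)))"
    unfolding PS_def d'_def using insert.hyps
    by (simp add: sum_distrib_left sum.distrib[symmetric] algebra_simps)
  ultimately show ?case by simp
qed

lemma PS_single:
  assumes "finite S" "s0 \<in> S" "\<And>s. s \<in> S \<Longrightarrow> s \<noteq> s0 \<Longrightarrow> e s = 0"
  shows "PS S e = (\<lambda>u v. e s0 * Psi (fst s0) (fst (snd s0)) (snd (snd s0)) u v)"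
proof (intro ext)
  fix u v
  have "PS S e u v = e s0 * Psi (fst s0) (fst (snd s0)) (snd (snd s0)) u v + (\<Sum>s\<in>S - {s0}. e s * Psi (fst s) (fst (snd s)) (snd (snd s)) u v)"
    unfolding PS_def using assms(1,2) by (simp add: sum.remove)
  also have "(\<Sum>s\<in>S - {s0}. e s * Psi (fst s) (fst (snd s)) (snd (snd s)) u v) = 0"
    using assms(3) by (intro sum.neutral) auto
  finally show "PS S e u v = e s0 * Psi (fst s0) (fst (snd s0)) (snd (snd s0)) u v" by simp
qed

lemma lam_inj: "lam l m = lam l' m \<Longrightarrow> l = l'"
proof -
  assume a: "lam l m = lam l' m"
  have "lam l m - lam l' m = (real l - real l') * (real l + real l' + 1)"
    unfolding lam_def by (simp add: algebra_simps)
  then have "(real l - real l') * (real l + real l' + 1) = 0" using a by simp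
  moreover have "real l + real l' + 1 \<noteq> 0" by (simp add: add_nonneg_pos)
  ultimately show "l = l'" by simp
qed

lemma stepA:
  assumes f: "f \<in> W" "f \<in> V_phys" "f \<noteq> (\<lambda>u v. 0)"
  shows "\<exists>s\<in>Psi_index. Psi (fst s) (fst (snd s)) (snd (snd s)) \<in> W"
proof -
  from f(2) obtain S c where S: "finite S" "S \<subseteq> Psi_index" and fe: "f = (\<lambda>u v. \<Sum>(l,m,n)\<in>S. c (l,m,n) * Psi l m n u v)"
    unfolding V_phys_def by blast
  have fPS: "f = PS S c" unfolding fe PS_def by (intro ext sum.cong refl) (auto simp: case_prod_beta)
  have "\<exists>s0\<in>S. c s0 \<noteq> 0"
  proof (rule ccontr)
    assume "\<not> (\<exists>s0\<in>S. c s0 \<noteq> 0)"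
    then have "PS S c = (\<lambda>u v. 0)" unfolding PS_def by (auto intro!: ext sum.neutral)
    then show False using f(3) fPS by simp
  qed
  then obtain s0 where s0: "s0 \<in> S" "c s0 \<noteq> 0" by blast
  define \<phi>1 :: "nat \<times> int \<times> int \<Rightarrow> complex" where "\<phi>1 s = of_int (fst (snd s))" for s
  define \<phi>2 :: "nat \<times> int \<times> int \<Rightarrow> complex" where "\<phi>2 s = of_int (snd (snd s))" for s
  define \<phi>3 :: "nat \<times> int \<times> int \<Rightarrow> complex" where "\<phi>3 s = of_real (lam (fst s) (fst (snd s)))" for s
  define \<Lambda>1 where "\<Lambda>1 = \<phi>1 ` S - {\<phi>1 s0}"
  define \<Lambda>2 where "\<Lambda>2 = \<phi>2 ` S - {\<phi>2 s0}"
  define \<Lambda>3 where "\<Lambda>3 = \<phi>3 ` S - {\<phi>3 s0}"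
  have fin: "finite \<Lambda>1" "finite \<Lambda>2" "finite \<Lambda>3" unfolding \<Lambda>1_def \<Lambda>2_def \<Lambda>3_def using S(1) by auto
  define e1 where "e1 s = c s * (\<Prod>\<mu>\<in>\<Lambda>1. (\<phi>1 s - \<mu>))" for s
  define e2 where "e2 s = e1 s * (\<Prod>\<mu>\<in>\<Lambda>2. (\<phi>2 s - \<mu>))" for s
  define e3 where "e3 s = e2 s * (\<Prod>\<mu>\<in>\<Lambda>3. (\<phi>3 s - \<mu>))" for s
  have dg1: "\<And>d. Lz (PS S d) = PS S (\<lambda>s. d s * \<phi>1 s)" unfolding \<phi>1_def by (rule diag_Lz[OF S])
  have dg2: "\<And>d. Mz (PS S d) = PS S (\<lambda>s. d s * \<phi>2 s)" unfolding \<phi>2_def by (rule diag_Mz[OF S])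
  have dg3: "\<And>d. Lp (Lm (PS S d)) = PS S (\<lambda>s. d s * \<phi>3 s)" unfolding \<phi>3_def by (rule diag_LpLm[OF S])
  have g0: "PS S c \<in> W" using f(1) fPS by simp
  have g1: "PS S e1 \<in> W" unfolding e1_def[abs_def] by (rule proj[OF W_Lz S(1) dg1 g0 fin(1)])
  have g2: "PS S e2 \<in> W" unfolding e2_def[abs_def] by (rule proj[OF W_Mz S(1) dg2 g1 fin(2)])
  have W3: "\<And>f. f \<in> W \<Longrightarrow> Lp (Lm f) \<in> W" by (intro W_Lp W_Lm)
  have g3: "PS S e3 \<in> W" unfolding e3_def[abs_def] by (rule proj[OF W3 S(1) dg3 g2 fin(3)])
  have nz: "(\<Prod>\<mu>\<in>\<Lambda>. (\<phi> s0 - \<mu>)) \<noteq> 0" if "finite \<Lambda>" "\<Lambda> = \<phi> ` S - {\<phi> s0}" for \<Lambda> and \<phi> :: "nat \<times> int \<times> int \<Rightarrow> complex"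
    using that by (auto simp: prod_zero_iff)
  have z: "(\<Prod>\<mu>\<in>\<Lambda>. (\<phi> s - \<mu>)) = 0" if "finite \<Lambda>" "\<Lambda> = \<phi> ` S - {\<phi> s0}" "s \<in> S" "\<phi> s \<noteq> \<phi> s0"
    for \<Lambda> and \<phi> :: "nat \<times> int \<times> int \<Rightarrow> complex" and s
    using that by (auto simp: prod_zero_iff)
  have e3s0: "e3 s0 \<noteq> 0" unfolding e3_def e2_def e1_def
    using s0(2) nz[OF fin(1) \<Lambda>1_def] nz[OF fin(2) \<Lambda>2_def] nz[OF fin(3) \<Lambda>3_def] by simp
  have e3z: "e3 s = 0" if s: "s \<in> S" "s \<noteq> s0" for s
  proof (cases "\<phi>1 s = \<phi>1 s0 \<and> \<phi>2 s = \<phi>2 s0 \<and> \<phi>3 s = \<phi>3 s0")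
    case True
    then have m: "fst (snd s) = fst (snd s0)" and n: "snd (snd s) = snd (snd s0)"
      and la: "lam (fst s) (fst (snd s)) = lam (fst s0) (fst (snd s0))"
      unfolding \<phi>1_def \<phi>2_def \<phi>3_def by auto
    have "fst s = fst s0" using la unfolding m by (rule lam_inj)
    then have "s = s0" using m n by (simp add: prod_eq_iff)
    then show ?thesis using s by simp
  next
    case False
    then show ?thesis unfolding e3_def e2_def e1_def
      using z[OF fin(1) \<Lambda>1_def s(1)] z[OF fin(2) \<Lambda>2_def s(1)] z[OF fin(3) \<Lambda>3_def s(1)] by auto
  qed
  have "(\<lambda>u v. e3 s0 * Psi (fst s0) (fst (snd s0)) (snd (snd s0)) u v) \<in> W"
    using g3 PS_single[OF S(1) s0(1), of e3] e3z by simp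
  then have "Psi (fst s0) (fst (snd s0)) (snd (snd s0)) \<in> W" by (rule cs_unscale[OF cs _ e3s0])
  then show ?thesis using s0(1) S(2) by blast
qed

end


context
  fixes W :: "phasefun set"
  assumes cs: "complex_subspace W" and inv: "INV W"
begin

lemma up_m:
  assumes a: "Psi l m n \<in> W" and b: "\<bar>m\<bar> \<le> int l"
  shows "Psi l (m + 1) n \<in> W"
proof -
  have "Lp (Psi l m n) \<in> W" by (rule W_Lp[OF cs inv a])
  then have "(\<lambda>u v. complex_of_real (kp l m) * Psi l (m + 1) n u v) \<in> W" unfolding Psi_Lp[OF b] .
  then show ?thesis by (rule cs_unscale[OF cs]) (use kp_nz[OF b] in simp)
qed
lemma dn_m:
  assumes a: "Psi l m n \<in> W" and b: "\<bar>m\<bar> \<le> int l"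
  shows "Psi l (m - 1) n \<in> W"
proof -
  have "Lm (Psi l m n) \<in> W" by (rule W_Lm[OF cs inv a])
  then have "(\<lambda>u v. complex_of_real (km l m) * Psi l (m - 1) n u v) \<in> W" unfolding Psi_Lm[OF b] .
  then show ?thesis by (rule cs_unscale[OF cs]) (use km_nz[OF b] in simp)
qed
lemma up_n:
  assumes a: "Psi l m n \<in> W" and b: "\<bar>n\<bar> \<le> int l"
  shows "Psi l m (n + 1) \<in> W"
proof -
  have "Mp (Psi l m n) \<in> W" by (rule W_Mp[OF cs inv a])
  then have "(\<lambda>u v. complex_of_real (kp l n) * Psi l m (n + 1) u v) \<in> W" unfolding Psi_Mp[OF b] .
  then show ?thesis by (rule cs_unscale[OF cs]) (use kp_nz[OF b] in simp)
qed
lemma dn_n: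
  assumes a: "Psi l m n \<in> W" and b: "\<bar>n\<bar> \<le> int l"
  shows "Psi l m (n - 1) \<in> W"
proof -
  have "Mm (Psi l m n) \<in> W" by (rule W_Mm[OF cs inv a])
  then have "(\<lambda>u v. complex_of_real (km l n) * Psi l m (n - 1) u v) \<in> W" unfolding Psi_Mm[OF b] .
  then show ?thesis by (rule cs_unscale[OF cs]) (use km_nz[OF b] in simp)
qed

lemma up_m_it: "Psi l m n \<in> W \<Longrightarrow> \<bar>m\<bar> \<le> int l \<Longrightarrow> m + int j \<le> int l \<Longrightarrow> Psi l (m + int j) n \<in> W"
proof (induction j)
  case 0 then show ?case by simp
next
  case (Suc j)
  then have "Psi l (m + int j) n \<in> W" by simp
  then have "Psi l (m + int j + 1) n \<in> W" using Suc.prems by (intro up_m) auto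
  moreover have "m + int j + 1 = m + int (Suc j)" by simp
  ultimately show ?case by simp
qed
lemma dn_m_it: "Psi l m n \<in> W \<Longrightarrow> \<bar>m\<bar> \<le> int l \<Longrightarrow> - int l \<le> m - int j \<Longrightarrow> Psi l (m - int j) n \<in> W"
proof (induction j)
  case 0 then show ?case by simp
next
  case (Suc j)
  then have "Psi l (m - int j) n \<in> W" by simp
  then have "Psi l (m - int j - 1) n \<in> W" using Suc.prems by (intro dn_m) auto
  then show ?case by (simp add: algebra_simps)
qed
lemma up_n_it: "Psi l m n \<in> W \<Longrightarrow> \<bar>n\<bar> \<le> int l \<Longrightarrow> n + int j \<le> int l \<Longrightarrow> Psi l m (n + int j) \<in> W"
proof (induction j)
  case 0 then show ?case by simp
next
  case (Suc j)
  then have "Psi l m (n + int j) \<in> W" by simp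
  then have "Psi l m (n + int j + 1) \<in> W" using Suc.prems by (intro up_n) auto
  moreover have "n + int j + 1 = n + int (Suc j)" by simp
  ultimately show ?case by simp
qed
lemma dn_n_it: "Psi l m n \<in> W \<Longrightarrow> \<bar>n\<bar> \<le> int l \<Longrightarrow> - int l \<le> n - int j \<Longrightarrow> Psi l m (n - int j) \<in> W"
proof (induction j)
  case 0 then show ?case by simp
next
  case (Suc j)
  then have "Psi l m (n - int j) \<in> W" by simp
  then have "Psi l m (n - int j - 1) \<in> W" using Suc.prems by (intro dn_n) auto
  then show ?case by (simp add: algebra_simps)
qed

lemma to_top:
  assumes "(l, m, n) \<in> Psi_index" "Psi l m n \<in> W"
  shows "Psi l (int l) (int l) \<in> W"
proof -
  have v: "\<bar>m\<bar> \<le> int l" "\<bar>n\<bar> \<le> int l" using assms(1) unfolding Psi_index_def by auto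
  have "Psi l (m + int (nat (int l - m))) n \<in> W" by (rule up_m_it[OF assms(2) v(1)]) (use v in simp)
  moreover have "m + int (nat (int l - m)) = int l" using v by simp
  ultimately have a: "Psi l (int l) n \<in> W" by simp
  have "Psi l (int l) (n + int (nat (int l - n))) \<in> W" by (rule up_n_it[OF a v(2)]) (use v in simp)
  moreover have "n + int (nat (int l - n)) = int l" using v by simp
  ultimately show ?thesis by simp
qed

lemma from_top:
  assumes "(l, m, n) \<in> Psi_index" "Psi l (int l) (int l) \<in> W"
  shows "Psi l m n \<in> W"
proof -
  have v: "\<bar>m\<bar> \<le> int l" "\<bar>n\<bar> \<le> int l" using assms(1) unfolding Psi_index_def by auto
  have "Psi l (int l - int (nat (int l - m))) (int l) \<in> W" by (rule dn_m_it[OF assms(2)]) (insert v, auto simp: abs_le_iff)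
  moreover have "int l - int (nat (int l - m)) = m" using v by simp
  ultimately have a: "Psi l m (int l) \<in> W" by simp
  have "Psi l m (int l - int (nat (int l - n))) \<in> W" by (rule dn_n_it[OF a]) (insert v, auto simp: abs_le_iff)
  moreover have "int l - int (nat (int l - n)) = n" using v by simp
  ultimately show ?thesis by simp
qed

lemma FF_iff: "FF l \<in> W \<longleftrightarrow> Psi l (int l) (int l) \<in> W"
proof
  assume "FF l \<in> W"
  then show "Psi l (int l) (int l) \<in> W" unfolding Psi_top by (rule cs_smult[OF cs])
next
  assume "Psi l (int l) (int l) \<in> W"
  then show "FF l \<in> W" unfolding Psi_top by (rule cs_unscale[OF cs]) (use cc_pos[of l] in simp)
qed

lemma FF_up: "FF l \<in> W \<Longrightarrow> FF (Suc l) \<in> W"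
proof -
  assume a: "FF l \<in> W"
  have h: "complex_of_nat (2*l+1) \<noteq> 0" by (simp only: of_nat_eq_0_iff; simp)
  show ?thesis using W_Cup[OF cs inv a] unfolding Cup_FF
    by (rule cs_unscale[OF cs]) (use h in simp)
qed

lemma FF_down:
  assumes a: "FF (Suc k) \<in> W" and b: "FF (Suc (Suc k)) \<in> W"
  shows "FF k \<in> W"
proof -
  have "Psi (Suc (Suc k)) (int (Suc (Suc k))) (int (Suc (Suc k))) \<in> W" using b FF_iff by blast
  then have "Psi (Suc (Suc k)) (int k) (int k) \<in> W" by (rule from_top[rotated]) (simp add: Psi_index_def)
  then have X: "XX (Suc k) \<in> W" unfolding Psi_sub2 by (rule cs_unscale[OF cs]) (use cx_pos[of k] in simp)
  have C: "Cdn (FF (Suc k)) \<in> W" using W_Cdn[OF cs inv a] .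
  have "(\<lambda>u v. of_nat (2*k+3) * Cdn (FF (Suc k)) u v + (-1) * XX (Suc k) u v) \<in> W"
    by (rule cs_lin[OF cs C X])
  moreover have "(\<lambda>u v. of_nat (2*k+3) * Cdn (FF (Suc k)) u v + (-1) * XX (Suc k) u v) = (\<lambda>u v. of_nat (4 * (Suc k)\<^sup>2) * FF k u v)"
    using Cdn_FF by (auto simp: fun_eq_iff)
  ultimately have "(\<lambda>u v. of_nat (4 * (Suc k)\<^sup>2) * FF k u v) \<in> W" by simp
  moreover have h: "complex_of_nat (4 * (Suc k)\<^sup>2) \<noteq> 0" by (simp only: of_nat_eq_0_iff; simp)
  ultimately show ?thesis by (rule cs_unscale[OF cs])
qed

lemma FF_all:
  assumes "FF L \<in> W"
  shows "FF l \<in> W"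
proof -
  have up: "FF (L + j) \<in> W" for j
    by (induction j) (use assms FF_up in auto)
  have Q: "\<forall>l. L - t \<le> l \<longrightarrow> FF l \<in> W" for t
  proof (induction t)
    case 0
    show ?case using up by (metis diff_zero le_Suc_ex)
  next
    case (Suc t)
    show ?case
    proof (intro allI impI)
      fix l assume l: "L - Suc t \<le> l"
      show "FF l \<in> W"
      proof (cases "L - t \<le> l")
        case True then show ?thesis using Suc.IH by blast
      next
        case False
        then have "L - t \<le> Suc l" "L - t \<le> Suc (Suc l)" using l by auto
        then show ?thesis using Suc.IH FF_down by blast
      qed
    qed
  qed
  show ?thesis using Q[of L] by simp
qed

end

theorem main_aux:
  assumes "W \<subseteq> V_phys"
    and cs: "complex_subspace W"
    and "W \<noteq> {\<lambda>u v. 0}"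
    and inv: "\<forall>i j. \<forall>f\<in>W. opA i j f \<in> W \<and> opB i j f \<in> W \<and> opC i j f \<in> W"
  shows "W = V_phys"
proof
  show "W \<subseteq> V_phys" by fact
  have I: "INV W" unfolding INV_def using inv .
  obtain f where f: "f \<in> W" "f \<noteq> (\<lambda>u v. 0)"
    using assms(3) cs_zero[OF cs] by blast
  obtain s where s: "s \<in> Psi_index" "Psi (fst s) (fst (snd s)) (snd (snd s)) \<in> W"
    using stepA[OF cs I f(1) _ f(2)] f(1) assms(1) by blast
  have "Psi (fst s) (int (fst s)) (int (fst s)) \<in> W"
    using to_top[OF cs I, of "fst s" "fst (snd s)" "snd (snd s)"] s by simp
  then have "FF (fst s) \<in> W" using FF_iff[OF cs I] by blast
  then have allF: "FF l \<in> W" for l by (rule FF_all[OF cs I])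
  have allP: "Psi l m n \<in> W" if "(l, m, n) \<in> Psi_index" for l m n
    using from_top[OF cs I that] allF FF_iff[OF cs I] by blast
  show "V_phys \<subseteq> W"
  proof
    fix g assume "g \<in> V_phys"
    then obtain S c where S: "finite S" "S \<subseteq> Psi_index" and ge: "g = (\<lambda>u v. \<Sum>(l,m,n)\<in>S. c (l,m,n) * Psi l m n u v)"
      unfolding V_phys_def by blast
    have "g = (\<lambda>u v. \<Sum>x\<in>S. c x * Psi (fst x) (fst (snd x)) (snd (snd x)) u v)"
      unfolding ge by (intro ext sum.cong refl) (auto simp: case_prod_beta)
    also have "\<dots> \<in> W"
      by (rule cs_sum[OF cs S(1)]) (use S(2) allP in auto)
    finally show "g \<in> W" .
  qed
qed


theorem mainTheorem6:
  assumes "W \<subseteq> V_phys"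
    and "complex_subspace W"
    and "W \<noteq> {\<lambda>u v. 0}"
    and "\<forall>i j. \<forall>f\<in>W. opA i j f \<in> W \<and> opB i j f \<in> W \<and> opC i j f \<in> W"
  shows "W = V_phys"
    using assms by (rule main_aux)

end
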